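(* Let $\mathcal{H},\mathcal{K}$ be complex Hilbert spaces of dimension greater than $2$, and let $(f_*,f^* ):(\mathsf{P}(\mathcal{H}),\mathsf{L}(\mathcal{H}),\bar e_{\mathcal{H}})\to(\mathsf{P}(\mathcal{K}),\mathsf{L}(\mathcal{K}),\bar e_{\mathcal{K}})$ be a Chu morphism with $f_*$ injective. Then there is a semiunitary $U:\mathcal{H}\to\mathcal{K}$ such that $f_*=\mathsf{P}(U)$, i.e. $f_*([\psi])=[U\psi]$ for all nonzero $\psi\in\mathcal{H}$. Moreover $U$ is unique up to multiplication by a scalar of modulus $1$.
   Context: A Chu space over $[0,1]$ is a triple $(X,A,e)$ with $e:X\times A\to[0,1]$; a Chu morphism $(X,A,e)\to(X',A',e')$ is a pair $(f_*:X\to X',\,f^*:A'\to A)$ with $e(x,f^*(a'))=e'(f_*(x),a')$ for all $x,a'$. For a complex Hilbert space $\mathcal{H}$: $\mathsf{L}(\mathcal{H})$ is the set of closed subspaces, $P_S$ the orthogonal projector onto $S$, $\mathsf{P}(\mathcal{H})$ the set of rays $[\psi]=\{\lambda\psi:\lambda\in\mathbb{C}\}$ with $\psi\ne0$, and $\bar e_{\mathcal{H}}([\psi],S)=\|P_S\psi\|^2/\|\psi\|^2$. A map $U:\mathcal{H}\to\mathcal{K}$ is semiunitary if it is a bijection with $U(\phi+\psi)=U\phi+U\psi$, $U(\lambda\phi)=\sigma(\lambda)U\phi$, $\langle U\phi,U\psi\rangle=\sigma(\langle\phi,\psi\rangle)$, where $\sigma$ is the identity or complex conjugation. *)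

theory Defs
  imports "HOL-Analysis.Analysis"
begin

class complex_inner = real_normed_vector +
  fixes scaleC :: "complex \<Rightarrow> 'a \<Rightarrow> 'a"
    and cinner :: "'a \<Rightarrow> 'a \<Rightarrow> complex"
  assumes scaleC_add_right: "scaleC c (x + y) = scaleC c x + scaleC c y"
    and scaleC_add_left: "scaleC (b + c) x = scaleC b x + scaleC c x"
    and scaleC_scaleC: "scaleC b (scaleC c x) = scaleC (b * c) x"
    and scaleC_one: "scaleC 1 x = x"
    and scaleR_scaleC: "scaleR r x = scaleC (complex_of_real r) x"
    and cinner_add_left: "cinner (x + y) z = cinner x z + cinner y z"
    and cinner_scaleC_left: "cinner (scaleC c x) y = cnj c * cinner x y"
    and cinner_commute: "cinner x y = cnj (cinner y x)"
    and cinner_ge_zero: "0 \<le> Re (cinner x x)"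
    and cinner_eq_zero_iff: "cinner x x = 0 \<longleftrightarrow> x = 0"
    and norm_eq_sqrt_cinner: "norm x = sqrt (Re (cinner x x))"

class chilbert = complex_inner + complete_space

definition csubspace :: "'a::complex_inner set \<Rightarrow> bool" where
  "csubspace S \<longleftrightarrow> 0 \<in> S \<and> (\<forall>x\<in>S. \<forall>y\<in>S. x + y \<in> S) \<and> (\<forall>c. \<forall>x\<in>S. scaleC c x \<in> S)"

definition closed_subspaces :: "'a::complex_inner set set" where
  "closed_subspaces = {S. csubspace S \<and> closed S}"

definition proj :: "'a::complex_inner set \<Rightarrow> 'a \<Rightarrow> 'a" where
  "proj S \<psi> = (THE p. p \<in> S \<and> (\<forall>s\<in>S. cinner s (\<psi> - p) = 0))"

definition ray :: "'a::complex_inner \<Rightarrow> 'a set" where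
  "ray \<psi> = range (\<lambda>c. scaleC c \<psi>)"

definition rays :: "'a::complex_inner set set" where
  "rays = {ray \<psi> | \<psi>. \<psi> \<noteq> 0}"

definition ray_rep :: "'a::complex_inner set \<Rightarrow> 'a" where
  "ray_rep R = (SOME \<psi>. \<psi> \<noteq> 0 \<and> R = ray \<psi>)"

text \<open>\<open>e_H([\<psi>],S) = \<parallel>P_S \<psi>\<parallel>^2 / \<parallel>\<psi>\<parallel>^2\<close> (independent of the chosen representative).\<close>
definition ebar :: "'a::complex_inner set \<Rightarrow> 'a set \<Rightarrow> real" where
  "ebar R S = (norm (proj S (ray_rep R)))\<^sup>2 / (norm (ray_rep R))\<^sup>2"

definition chu_morphism ::
  "'x set \<Rightarrow> 'a set \<Rightarrow> ('x \<Rightarrow> 'a \<Rightarrow> real) \<Rightarrow> 'y set \<Rightarrow> 'b set \<Rightarrow> ('y \<Rightarrow> 'b \<Rightarrow> real)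
   \<Rightarrow> ('x \<Rightarrow> 'y) \<Rightarrow> ('b \<Rightarrow> 'a) \<Rightarrow> bool" where
  "chu_morphism X A e X' A' e' fl fu \<longleftrightarrow>
     (\<forall>x\<in>X. fl x \<in> X') \<and> (\<forall>a\<in>A'. fu a \<in> A) \<and>
     (\<forall>x\<in>X. \<forall>a\<in>A'. e x (fu a) = e' (fl x) a)"

definition cdim_gt_2 :: "'a::complex_inner itself \<Rightarrow> bool" where
  "cdim_gt_2 _ \<longleftrightarrow> (\<exists>x y z :: 'a. \<forall>a b c.
      scaleC a x + scaleC b y + scaleC c z = 0 \<longrightarrow> a = 0 \<and> b = 0 \<and> c = 0)"

definition semiunitary :: "('a::complex_inner \<Rightarrow> 'b::complex_inner) \<Rightarrow> bool" where
  "semiunitary U \<longleftrightarrow> bij U \<and> (\<forall>\<phi> \<psi>. U (\<phi> + \<psi>) = U \<phi> + U \<psi>) \<and>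
     (\<exists>\<sigma>. (\<sigma> = id \<or> \<sigma> = cnj) \<and>
        (\<forall>c \<phi>. U (scaleC c \<phi>) = scaleC (\<sigma> c) (U \<phi>)) \<and>
        (\<forall>\<phi> \<psi>. cinner (U \<phi>) (U \<psi>) = \<sigma> (cinner \<phi> \<psi>)))"

end

theory Submission
  imports Defs
begin


lemma scaleC_zero_left[simp]: "scaleC 0 (x::'a::complex_inner) = 0"
  using scaleR_scaleC[of 0 x] by simp

lemma scaleC_minus1: "scaleC (-1) (x::'a::complex_inner) = - x"
  using scaleR_scaleC[of "-1" x] by simp

lemma scaleC_zero_right[simp]: "scaleC c (0::'a::complex_inner) = 0"
  by (metis mult_zero_right scaleC_scaleC scaleC_zero_left)

lemma scaleC_minus_left: "scaleC (-c) (x::'a::complex_inner) = - scaleC c x"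
proof -
  have "scaleC (-c) x + scaleC c x = 0"
    by (metis add.commute add.right_inverse scaleC_add_left scaleC_zero_left)
  then show ?thesis by (simp add: eq_neg_iff_add_eq_0)
qed

lemma scaleC_minus_right: "scaleC c (- (x::'a::complex_inner)) = - scaleC c x"
  by (metis mult.commute mult_minus1_right scaleC_minus1 scaleC_minus_left scaleC_scaleC)

lemma scaleC_diff_left: "scaleC (b - c) (x::'a::complex_inner) = scaleC b x - scaleC c x"
  by (metis diff_conv_add_uminus scaleC_add_left scaleC_minus_left)

lemma scaleC_diff_right: "scaleC c (x - (y::'a::complex_inner)) = scaleC c x - scaleC c y"
  by (metis diff_conv_add_uminus scaleC_add_right scaleC_minus_right)

lemma cinner_add_right: "cinner (x::'a::complex_inner) (y + z) = cinner x y + cinner x z"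
  by (metis cinner_add_left cinner_commute complex_cnj_add)

lemma cinner_scaleC_right: "cinner (x::'a::complex_inner) (scaleC c y) = c * cinner x y"
  by (metis cinner_commute cinner_scaleC_left complex_cnj_cnj complex_cnj_mult)

lemma cinner_zero_left[simp]: "cinner 0 (x::'a::complex_inner) = 0"
  by (metis cinner_scaleC_left complex_cnj_zero mult_zero_left scaleC_zero_left)

lemma cinner_zero_right[simp]: "cinner (x::'a::complex_inner) 0 = 0"
  by (metis cinner_commute cinner_zero_left complex_cnj_zero)

lemma cinner_minus_left: "cinner (- x) (y::'a::complex_inner) = - cinner x y"
  by (metis cinner_scaleC_left complex_cnj_minus complex_cnj_one mult_minus1 scaleC_minus1)

lemma cinner_minus_right: "cinner (x::'a::complex_inner) (- y) = - cinner x y"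
  by (metis cinner_scaleC_right mult_minus1 scaleC_minus1)

lemma cinner_diff_left: "cinner (x - y) (z::'a::complex_inner) = cinner x z - cinner y z"
  using cinner_add_left[of x "-y" z] cinner_minus_left[of y z] by simp

lemma cinner_diff_right: "cinner (x::'a::complex_inner) (y - z) = cinner x y - cinner x z"
  using cinner_add_right[of x y "-z"] cinner_minus_right[of x z] by simp

lemmas ci_simps = cinner_add_left cinner_add_right cinner_diff_left cinner_diff_right
  cinner_scaleC_left cinner_scaleC_right cinner_minus_left cinner_minus_right

lemma cinner_self: "cinner (x::'a::complex_inner) x = complex_of_real ((norm x)\<^sup>2)"
proof -
  have im: "Im (cinner x x) = 0"
    using cinner_commute[of x x] by (metis cnj.simps(2) neg_equal_zero)
  have "(norm x)\<^sup>2 = Re (cinner x x)"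
    using norm_eq_sqrt_cinner[of x] cinner_ge_zero[of x] by simp
  then show ?thesis using im by (simp add: complex_eq_iff)
qed

lemma norm_sq_cinner: "(norm (x::'a::complex_inner))\<^sup>2 = Re (cinner x x)"
  using cinner_self[of x] by simp

lemma norm_scaleC: "norm (scaleC c (x::'a::complex_inner)) = cmod c * norm x"
proof -
  have "cinner (scaleC c x) (scaleC c x) = cnj c * c * cinner x x"
    by (simp add: cinner_scaleC_left cinner_scaleC_right)
  then have "complex_of_real ((norm (scaleC c x))\<^sup>2) = cnj c * c * complex_of_real ((norm x)\<^sup>2)"
    by (simp only: cinner_self)
  also have "cnj c * c = complex_of_real ((cmod c)\<^sup>2)"
    by (metis complex_norm_square mult.commute)
  finally have "(norm (scaleC c x))\<^sup>2 = (cmod c * norm x)\<^sup>2"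
    by (metis of_real_eq_iff of_real_mult power_mult_distrib)
  then show ?thesis by (simp add: power2_eq_iff_nonneg)
qed

lemma scaleC_eq_0_iff[simp]: "scaleC c (x::'a::complex_inner) = 0 \<longleftrightarrow> c = 0 \<or> x = 0"
proof -
  have "scaleC c x = 0 \<longleftrightarrow> norm (scaleC c x) = 0" by simp
  also have "\<dots> \<longleftrightarrow> c = 0 \<or> x = 0" by (simp add: norm_scaleC)
  finally show ?thesis .
qed

lemma scaleC_cancel: "scaleC a (x::'a::complex_inner) = scaleC b x \<Longrightarrow> x \<noteq> 0 \<Longrightarrow> a = b"
proof -
  assume "scaleC a x = scaleC b x" "x \<noteq> 0"
  then have "scaleC (a - b) x = 0" by (simp add: scaleC_diff_left)
  then show "a = b" using \<open>x \<noteq> 0\<close> by simp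
qed

lemma scaleC_cancel2: "scaleC c (x::'a::complex_inner) = scaleC c y \<Longrightarrow> c \<noteq> 0 \<Longrightarrow> x = y"
proof -
  assume "scaleC c x = scaleC c y" "c \<noteq> 0"
  then have "scaleC c (x - y) = 0" by (simp add: scaleC_diff_right)
  then show "x = y" using \<open>c \<noteq> 0\<close> by simp
qed

lemma cinner_self_eq0[simp]: "cinner x (x::'a::complex_inner) = 0 \<longleftrightarrow> x = 0"
  by (rule cinner_eq_zero_iff)

lemma cinner_cnj: "cnj (cinner x (y::'a::complex_inner)) = cinner y x"
  using cinner_commute[of y x] by simp

lemma cmod_cinner_commute: "cmod (cinner x (y::'a::complex_inner)) = cmod (cinner y x)"
  using cinner_commute[of x y] complex_mod_cnj by simp

lemma cinner_self_cmod: "cmod (cinner x (x::'a::complex_inner)) = (norm x)\<^sup>2"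
  by (simp add: cinner_self norm_power)

lemma norm_one_of_cinner: "cinner w (w::'a::complex_inner) = 1 \<Longrightarrow> norm w = 1"
  using norm_sq_cinner[of w] norm_ge_zero[of w] by (simp add: power2_eq_1_iff)

lemma pyth: "cinner a (w::'a::complex_inner) = 0 \<Longrightarrow> (norm (a + w))\<^sup>2 = (norm a)\<^sup>2 + (norm w)\<^sup>2"
proof -
  assume h: "cinner a w = 0"
  then have h2: "cinner w a = 0" by (metis cinner_cnj complex_cnj_zero)
  have "cinner (a + w) (a + w) = cinner a a + cinner w w"
    using h h2 by (simp add: ci_simps)
  then have "complex_of_real ((norm (a + w))\<^sup>2) = complex_of_real ((norm a)\<^sup>2 + (norm w)\<^sup>2)"
    by (simp add: cinner_self)
  then show ?thesis by (simp only: of_real_eq_iff)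
qed

lemma cs_decomp:
  fixes a b :: "'a::complex_inner"
  assumes "a \<noteq> 0"
  defines "c \<equiv> cinner a b / cinner a a"
  shows "b = scaleC c a + (b - scaleC c a)" and "cinner a (b - scaleC c a) = 0"
    and "(cmod (cinner a b))\<^sup>2 = (norm a)\<^sup>2 * ((norm b)\<^sup>2 - (norm (b - scaleC c a))\<^sup>2)"
proof -
  show "b = scaleC c a + (b - scaleC c a)" by simp
  have aa: "cinner a a \<noteq> 0" using assms by simp
  show o: "cinner a (b - scaleC c a) = 0"
    using aa by (simp add: ci_simps c_def)
  have o2: "cinner (scaleC c a) (b - scaleC c a) = 0" using o by (simp add: ci_simps)
  have "(norm b)\<^sup>2 = (norm (scaleC c a))\<^sup>2 + (norm (b - scaleC c a))\<^sup>2"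
    using pyth[OF o2] by simp
  moreover have "(norm (scaleC c a))\<^sup>2 * (norm a)\<^sup>2 = (cmod (cinner a b))\<^sup>2"
  proof -
    have na: "norm a \<noteq> 0" using assms by simp
    have "cmod c = cmod (cinner a b) / (norm a)\<^sup>2"
      by (simp add: c_def norm_divide cinner_self_cmod)
    then show ?thesis using na by (simp add: norm_scaleC power_mult_distrib power_divide field_simps power2_eq_square)
  qed
  ultimately show "(cmod (cinner a b))\<^sup>2 = (norm a)\<^sup>2 * ((norm b)\<^sup>2 - (norm (b - scaleC c a))\<^sup>2)"
    by (simp add: algebra_simps)
qed

lemma cauchy_schwarz: "cmod (cinner a (b::'a::complex_inner)) \<le> norm a * norm b"
proof (cases "a = 0")
  case True then show ?thesis by simp
next
  case False
  have "(cmod (cinner a b))\<^sup>2 \<le> (norm a * norm b)\<^sup>2"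
    using cs_decomp(3)[OF False, of b] by (simp add: power_mult_distrib mult_left_mono)
  then show ?thesis by (simp add: power2_le_iff_abs_le)
qed

lemma cs_eq:
  fixes a b :: "'a::complex_inner"
  assumes "a \<noteq> 0" and "(cmod (cinner a b))\<^sup>2 = (norm a)\<^sup>2 * (norm b)\<^sup>2"
  shows "b = scaleC (cinner a b / cinner a a) a"
proof -
  have "(norm a)\<^sup>2 * (norm (b - scaleC (cinner a b / cinner a a) a))\<^sup>2 = 0"
    using cs_decomp(3)[OF assms(1), of b] assms(2) by (simp add: algebra_simps)
  then show ?thesis using assms(1) by simp
qed

lemma bessel2:
  fixes y w1 w2 :: "'a::complex_inner"
  assumes o11: "cinner w1 w1 = 1" and o22: "cinner w2 w2 = 1" and o12: "cinner w1 w2 = 0"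
    and eq: "(norm y)\<^sup>2 = (cmod (cinner w1 y))\<^sup>2 + (cmod (cinner w2 y))\<^sup>2"
  shows "y = scaleC (cinner w1 y) w1 + scaleC (cinner w2 y) w2"
proof -
  have o21: "cinner w2 w1 = 0" using o12 by (metis cinner_cnj complex_cnj_zero)
  define r where "r = y - scaleC (cinner w1 y) w1 - scaleC (cinner w2 y) w2"
  have r1: "cinner w1 r = 0" unfolding r_def using o11 o12 by (simp add: ci_simps)
  have r2: "cinner w2 r = 0" unfolding r_def using o22 o21 by (simp add: ci_simps)
  have n1: "norm w1 = 1" using o11 by (rule norm_one_of_cinner)
  have n2: "norm w2 = 1" using o22 by (rule norm_one_of_cinner)
  have y: "y = scaleC (cinner w1 y) w1 + (scaleC (cinner w2 y) w2 + r)" unfolding r_def by simp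
  have a: "cinner (scaleC (cinner w1 y) w1) (scaleC (cinner w2 y) w2 + r) = 0"
    using o12 r1 by (simp add: ci_simps)
  have b: "cinner (scaleC (cinner w2 y) w2) r = 0"
    using r2 by (simp add: ci_simps)
  have "(norm y)\<^sup>2 = (norm (scaleC (cinner w1 y) w1))\<^sup>2 + (norm (scaleC (cinner w2 y) w2 + r))\<^sup>2"
    using pyth[OF a] y by metis
  also have "(norm (scaleC (cinner w2 y) w2 + r))\<^sup>2 = (norm (scaleC (cinner w2 y) w2))\<^sup>2 + (norm r)\<^sup>2"
    using pyth[OF b] .
  finally have "(norm y)\<^sup>2 = (cmod (cinner w1 y))\<^sup>2 + (cmod (cinner w2 y))\<^sup>2 + (norm r)\<^sup>2"
    using n1 n2 by (simp add: norm_scaleC)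
  then have "(norm r)\<^sup>2 = 0" using eq by linarith
  then have "r = 0" by simp
  then show ?thesis unfolding r_def by (simp add: diff_eq_eq add_ac)
qed

lemma bessel3:
  fixes y w1 w2 w3 :: "'a::complex_inner"
  assumes o11: "cinner w1 w1 = 1" and o22: "cinner w2 w2 = 1" and o33: "cinner w3 w3 = 1"
    and o12: "cinner w1 w2 = 0" and o13: "cinner w1 w3 = 0" and o23: "cinner w2 w3 = 0"
    and eq: "(norm y)\<^sup>2 = (cmod (cinner w1 y))\<^sup>2 + (cmod (cinner w2 y))\<^sup>2 + (cmod (cinner w3 y))\<^sup>2"
  shows "y = scaleC (cinner w1 y) w1 + scaleC (cinner w2 y) w2 + scaleC (cinner w3 y) w3"
proof -
  have o21: "cinner w2 w1 = 0" using o12 by (metis cinner_cnj complex_cnj_zero)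
  have o31: "cinner w3 w1 = 0" using o13 by (metis cinner_cnj complex_cnj_zero)
  have o32: "cinner w3 w2 = 0" using o23 by (metis cinner_cnj complex_cnj_zero)
  define r where "r = y - scaleC (cinner w1 y) w1 - scaleC (cinner w2 y) w2 - scaleC (cinner w3 y) w3"
  have r1: "cinner w1 r = 0" unfolding r_def using o11 o12 o13 by (simp add: ci_simps)
  have r2: "cinner w2 r = 0" unfolding r_def using o22 o21 o23 by (simp add: ci_simps)
  have r3: "cinner w3 r = 0" unfolding r_def using o33 o31 o32 by (simp add: ci_simps)
  have n1: "norm w1 = 1" using o11 by (rule norm_one_of_cinner)
  have n2: "norm w2 = 1" using o22 by (rule norm_one_of_cinner)
  have n3: "norm w3 = 1" using o33 by (rule norm_one_of_cinner)
  have y: "y = scaleC (cinner w1 y) w1 + (scaleC (cinner w2 y) w2 + (scaleC (cinner w3 y) w3 + r))"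
    unfolding r_def by simp
  have a: "cinner (scaleC (cinner w1 y) w1) (scaleC (cinner w2 y) w2 + (scaleC (cinner w3 y) w3 + r)) = 0"
    using o12 o13 r1 by (simp add: ci_simps)
  have b: "cinner (scaleC (cinner w2 y) w2) (scaleC (cinner w3 y) w3 + r) = 0"
    using o23 r2 by (simp add: ci_simps)
  have c: "cinner (scaleC (cinner w3 y) w3) r = 0"
    using r3 by (simp add: ci_simps)
  have "(norm y)\<^sup>2 = (norm (scaleC (cinner w1 y) w1))\<^sup>2 + (norm (scaleC (cinner w2 y) w2 + (scaleC (cinner w3 y) w3 + r)))\<^sup>2"
    using pyth[OF a] y by metis
  also have "(norm (scaleC (cinner w2 y) w2 + (scaleC (cinner w3 y) w3 + r)))\<^sup>2 = (norm (scaleC (cinner w2 y) w2))\<^sup>2 + (norm (scaleC (cinner w3 y) w3 + r))\<^sup>2"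
    using pyth[OF b] .
  also have "(norm (scaleC (cinner w3 y) w3 + r))\<^sup>2 = (norm (scaleC (cinner w3 y) w3))\<^sup>2 + (norm r)\<^sup>2"
    using pyth[OF c] .
  finally have "(norm y)\<^sup>2 = (cmod (cinner w1 y))\<^sup>2 + (cmod (cinner w2 y))\<^sup>2 + (cmod (cinner w3 y))\<^sup>2 + (norm r)\<^sup>2"
    using n1 n2 n3 by (simp add: norm_scaleC)
  then have "(norm r)\<^sup>2 = 0" using eq by linarith
  then have "r = 0" by simp
  then show ?thesis unfolding r_def by (simp add: diff_eq_eq add_ac)
qed


section \<open>Rays, projections, transition probabilities\<close>

lemma ray_mem: "x \<in> ray a \<longleftrightarrow> (\<exists>c. x = scaleC c (a::'a::complex_inner))"
  by (auto simp: ray_def)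

lemma ray_self: "a \<in> ray (a::'a::complex_inner)"
  unfolding ray_mem by (metis scaleC_one)

lemma ray_scale: "c \<noteq> 0 \<Longrightarrow> ray (scaleC c a) = ray (a::'a::complex_inner)"
proof
  assume c: "c \<noteq> 0"
  show "ray (scaleC c a) \<subseteq> ray a"
    by (auto simp: ray_mem scaleC_scaleC)
  show "ray a \<subseteq> ray (scaleC c a)"
  proof
    fix x assume "x \<in> ray a"
    then obtain d where "x = scaleC d a" by (auto simp: ray_mem)
    then have "x = scaleC (d / c) (scaleC c a)" using c by (simp add: scaleC_scaleC)
    then show "x \<in> ray (scaleC c a)" by (auto simp: ray_mem)
  qed
qed

lemma ray_eq_of_mem: "b \<in> ray a \<Longrightarrow> b \<noteq> 0 \<Longrightarrow> ray b = ray (a::'a::complex_inner)"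
  by (metis ray_mem ray_scale scaleC_eq_0_iff)

lemma ray_eq_D: "ray a = ray b \<Longrightarrow> b \<noteq> 0 \<Longrightarrow> \<exists>c. c \<noteq> 0 \<and> b = scaleC c (a::'a::complex_inner)"
  by (metis ray_mem ray_self scaleC_eq_0_iff)

lemma ray_in_rays: "a \<noteq> 0 \<Longrightarrow> ray a \<in> rays"
  by (auto simp: rays_def)

lemma rays_D: "R \<in> rays \<Longrightarrow> \<exists>a. a \<noteq> 0 \<and> R = ray a"
  by (auto simp: rays_def)

lemma ray_rep_props: "R \<in> rays \<Longrightarrow> ray_rep R \<noteq> 0 \<and> R = ray (ray_rep R)"
proof -
  assume "R \<in> rays"
  then have "\<exists>\<psi>. \<psi> \<noteq> 0 \<and> R = ray \<psi>" by (rule rays_D)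
  then show "ray_rep R \<noteq> 0 \<and> R = ray (ray_rep R)" unfolding ray_rep_def by (rule someI_ex)
qed

lemma csubspace_ray: "csubspace (ray (a::'a::complex_inner))"
  unfolding csubspace_def
proof (intro conjI ballI allI)
  show "0 \<in> ray a" unfolding ray_mem by (rule exI[of _ 0]) simp
next
  fix x y assume "x \<in> ray a" "y \<in> ray a"
  then obtain c d where "x = scaleC c a" "y = scaleC d a" by (auto simp: ray_mem)
  then have "x + y = scaleC (c + d) a" by (simp add: scaleC_add_left)
  then show "x + y \<in> ray a" unfolding ray_mem by blast
next
  fix k x assume "x \<in> ray a"
  then obtain c where "x = scaleC c a" by (auto simp: ray_mem)
  then have "scaleC k x = scaleC (k * c) a" by (simp add: scaleC_scaleC)
  then show "scaleC k x \<in> ray a" unfolding ray_mem by blast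
qed

lemma closed_ray: "closed (ray (a::'a::complex_inner))"
proof (cases "a = 0")
  case True
  then have "ray a = {0}" by (auto simp: ray_mem)
  then show ?thesis by simp
next
  case False
  define h where "h x = x - scaleC (cinner a x / cinner a a) a" for x
  have aa: "cinner a a \<noteq> 0" using False by simp
  have eq: "ray a = h -` {0}"
  proof
    show "ray a \<subseteq> h -` {0}"
      using aa by (auto simp: ray_mem h_def ci_simps scaleC_scaleC)
    show "h -` {0} \<subseteq> ray a"
      by (auto simp: ray_mem h_def)
  qed
  have bl: "bounded_linear h"
  proof (rule bounded_linear_intro[where K=2])
    fix x y show "h (x + y) = h x + h y"
      by (simp add: h_def ci_simps add_divide_distrib scaleC_add_left)
  next
    fix r x show "h (scaleR r x) = scaleR r (h x)"
      by (simp add: h_def scaleR_scaleC ci_simps scaleC_diff_right scaleC_scaleC)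
  next
    fix x
    have "norm (scaleC (cinner a x / cinner a a) a) = cmod (cinner a x) / (norm a)\<^sup>2 * norm a"
      by (simp add: norm_scaleC norm_divide cinner_self_cmod)
    also have "\<dots> \<le> norm a * norm x / (norm a)\<^sup>2 * norm a"
      by (intro mult_right_mono divide_right_mono cauchy_schwarz) auto
    also have "\<dots> = norm x" using False by (simp add: power2_eq_square)
    finally have "norm (scaleC (cinner a x / cinner a a) a) \<le> norm x" .
    then show "norm (h x) \<le> norm x * 2"
      unfolding h_def using norm_triangle_ineq4[of x "scaleC (cinner a x / cinner a a) a"] by linarith
  qed
  show ?thesis unfolding eq
    by (rule continuous_closed_vimage) (auto intro: linear_continuous_at bl)
qed

lemma ray_closed_subspace: "ray (a::'a::complex_inner) \<in> closed_subspaces"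
  by (simp add: closed_subspaces_def csubspace_ray closed_ray)

lemma proj_eq:
  assumes "csubspace S" "p \<in> S" "\<forall>s\<in>S. cinner s (\<psi> - p) = 0"
  shows "proj S \<psi> = (p::'a::complex_inner)"
  unfolding proj_def
proof (rule the_equality)
  show "p \<in> S \<and> (\<forall>s\<in>S. cinner s (\<psi> - p) = 0)" using assms by auto
next
  fix q assume q: "q \<in> S \<and> (\<forall>s\<in>S. cinner s (\<psi> - q) = 0)"
  have "q - p \<in> S" using assms(1,2) q unfolding csubspace_def
    by (metis diff_conv_add_uminus scaleC_minus1)
  then have "cinner (q - p) (\<psi> - p) = 0" "cinner (q - p) (\<psi> - q) = 0" using assms q by auto
  then have "cinner (q - p) ((\<psi> - p) - (\<psi> - q)) = 0" by (simp add: cinner_diff_right)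
  then have "cinner (q - p) (q - p) = 0" by simp
  then show "q = p" by simp
qed

lemma proj_ray: "a \<noteq> 0 \<Longrightarrow> proj (ray a) \<psi> = scaleC (cinner a \<psi> / cinner a a) (a::'a::complex_inner)"
  by (rule proj_eq) (auto simp: csubspace_ray ray_mem ci_simps)

lemma proj_mem: "csubspace S \<Longrightarrow> \<psi> \<in> S \<Longrightarrow> proj S \<psi> = (\<psi>::'a::complex_inner)"
  by (rule proj_eq) auto

lemma csubspace_zero: "csubspace {0::'a::complex_inner}"
  by (simp add: csubspace_def)

lemma proj_zero: "proj {0} \<psi> = (0::'a::complex_inner)"
  by (rule proj_eq) (auto simp: csubspace_zero)

definition tp :: "'a::complex_inner \<Rightarrow> 'a \<Rightarrow> real" where
  "tp a b = (cmod (cinner a b))\<^sup>2 / ((norm a)\<^sup>2 * (norm b)\<^sup>2)"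

lemma tp_sym: "tp a b = tp b a"
  by (simp add: tp_def cmod_cinner_commute mult.commute)

lemma tp_scale_left: "c \<noteq> 0 \<Longrightarrow> tp (scaleC c a) b = tp a b"
  by (simp add: tp_def cinner_scaleC_left norm_scaleC norm_mult power_mult_distrib)

lemma tp_scale_right: "c \<noteq> 0 \<Longrightarrow> tp a (scaleC c b) = tp a b"
  by (metis tp_scale_left tp_sym)

lemma tp_ray: "a' \<in> ray a \<Longrightarrow> a' \<noteq> 0 \<Longrightarrow> b' \<in> ray b \<Longrightarrow> b' \<noteq> 0 \<Longrightarrow> tp a' b' = tp a b"
  by (metis ray_mem scaleC_eq_0_iff tp_scale_left tp_scale_right)

lemma tp_self: "a \<noteq> 0 \<Longrightarrow> tp a a = 1"
  by (simp add: tp_def cinner_self_cmod power2_eq_square)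

lemma tp_zero_iff: "a \<noteq> 0 \<Longrightarrow> b \<noteq> 0 \<Longrightarrow> tp a b = 0 \<longleftrightarrow> cinner a b = 0"
  by (simp add: tp_def)

lemma tp_one: "a \<noteq> 0 \<Longrightarrow> b \<noteq> 0 \<Longrightarrow> tp a b = 1 \<Longrightarrow> ray b = ray a"
proof -
  assume a: "a \<noteq> 0" and b: "b \<noteq> 0" and t: "tp a b = 1"
  then have "(cmod (cinner a b))\<^sup>2 = (norm a)\<^sup>2 * (norm b)\<^sup>2" by (simp add: tp_def)
  from cs_eq[OF a this] have "b \<in> ray a" by (auto simp: ray_mem)
  then show ?thesis using b by (rule ray_eq_of_mem)
qed

lemma tp_cmod: "tp a b = tp x y \<Longrightarrow> norm a = norm x \<Longrightarrow> norm b = norm y \<Longrightarrow> x \<noteq> 0 \<Longrightarrow> y \<noteq> 0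
  \<Longrightarrow> cmod (cinner a b) = cmod (cinner x (y::'a::complex_inner))"
  by (simp add: tp_def power2_eq_iff_nonneg)

lemma ebar_ray: "a \<noteq> 0 \<Longrightarrow> b \<noteq> 0 \<Longrightarrow> ebar (ray a) (ray b) = tp b (a::'a::complex_inner)"
proof -
  assume a: "a \<noteq> 0" and b: "b \<noteq> 0"
  define r where "r = ray_rep (ray a)"
  have r: "r \<noteq> 0" "ray a = ray r" using ray_rep_props[OF ray_in_rays[OF a]] by (auto simp: r_def)
  have ra: "r \<in> ray a" using r ray_self by metis
  have "ebar (ray a) (ray b) = (norm (scaleC (cinner b r / cinner b b) b))\<^sup>2 / (norm r)\<^sup>2"
    unfolding ebar_def r_def[symmetric] proj_ray[OF b] ..
  also have "\<dots> = tp b r"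
    using b by (simp add: tp_def norm_scaleC norm_divide cinner_self_cmod power_divide
        power_mult_distrib field_simps power2_eq_square)
  also have "\<dots> = tp b a" using tp_ray[OF ray_self b ra r(1)] .
  finally show ?thesis .
qed

lemma ebar_mem: "csubspace T \<Longrightarrow> a \<noteq> 0 \<Longrightarrow> a \<in> T \<Longrightarrow> ebar (ray a) T = 1"
proof -
  assume T: "csubspace T" and a: "a \<noteq> 0" "a \<in> T"
  define r where "r = ray_rep (ray a)"
  have r: "r \<noteq> 0" "ray a = ray r" using ray_rep_props[OF ray_in_rays[OF a(1)]] by (auto simp: r_def)
  then obtain c where "r = scaleC c a" using ray_self ray_mem by metis
  then have "r \<in> T" using T a unfolding csubspace_def by auto
  then have "proj T r = r" using proj_mem[OF T] by simp
  then show ?thesis using r unfolding ebar_def r_def[symmetric] by simp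
qed

lemma ebar_zero: "a \<noteq> 0 \<Longrightarrow> ebar (ray a) {0::'a::complex_inner} = 0"
  by (simp add: ebar_def proj_zero)

lemma csubspace_cases: "csubspace T \<Longrightarrow> T = {0} \<or> (\<exists>x\<in>T. x \<noteq> (0::'a::complex_inner))"
  unfolding csubspace_def by blast


section \<open>From the Chu morphism to a transition-probability preserving bijection\<close>

locale chu_setup =
  fixes fl :: "'h::complex_inner set \<Rightarrow> 'k::complex_inner set" and fu :: "'k set \<Rightarrow> 'h set"
  assumes chu: "chu_morphism rays closed_subspaces ebar rays closed_subspaces ebar fl fu"
    and inj: "inj_on fl rays"
begin

lemma fl_rays: "R \<in> rays \<Longrightarrow> fl R \<in> rays"
  using chu by (simp add: chu_morphism_def)

lemma fu_cs: "S \<in> closed_subspaces \<Longrightarrow> csubspace (fu S)"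
  using chu by (simp add: chu_morphism_def closed_subspaces_def)

lemma chu_eq: "R \<in> rays \<Longrightarrow> S \<in> closed_subspaces \<Longrightarrow> ebar R (fu S) = ebar (fl R) S"
  using chu by (simp add: chu_morphism_def)

definition F :: "'h \<Rightarrow> 'k" where "F x = ray_rep (fl (ray x))"

lemma F_props: "x \<noteq> 0 \<Longrightarrow> F x \<noteq> 0 \<and> fl (ray x) = ray (F x)"
  unfolding F_def using ray_rep_props[OF fl_rays[OF ray_in_rays]] by blast

lemma F_nz: "x \<noteq> 0 \<Longrightarrow> F x \<noteq> 0" using F_props by blast
lemma F_ray: "x \<noteq> 0 \<Longrightarrow> fl (ray x) = ray (F x)" using F_props by blast

lemma ebar_fu: "y \<noteq> 0 \<Longrightarrow> S \<in> closed_subspaces \<Longrightarrow> ebar (ray y) (fu S) = ebar (ray (F y)) S"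
  using chu_eq[OF ray_in_rays] F_ray by simp

lemma hit: "S \<in> closed_subspaces \<Longrightarrow> z \<in> fu S \<Longrightarrow> z \<noteq> 0 \<Longrightarrow> ebar (ray (F z)) S = 1"
  using ebar_fu ebar_mem[OF fu_cs] by metis

lemma fu_ray_F: assumes x: "x \<noteq> 0" shows "fu (ray (F x)) = ray x"
proof -
  define T where "T = fu (ray (F x))"
  have T: "csubspace T" unfolding T_def by (rule fu_cs[OF ray_closed_subspace])
  have Fx: "F x \<noteq> 0" using F_nz[OF x] .
  have sub: "z \<in> ray x" if "z \<in> T" "z \<noteq> 0" for z
  proof -
    have "ebar (ray (F z)) (ray (F x)) = 1" using hit[OF ray_closed_subspace] that T_def by simp
    then have "tp (F x) (F z) = 1" using ebar_ray[OF F_nz[OF that(2)] Fx] by simp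
    then have "ray (F z) = ray (F x)" using tp_one[OF Fx F_nz[OF that(2)]] by simp
    then have "fl (ray z) = fl (ray x)" using F_ray that(2) x by simp
    then have "ray z = ray x" using inj ray_in_rays that(2) x by (auto dest: inj_onD)
    then show ?thesis using ray_self by metis
  qed
  have "T \<noteq> {0}"
  proof
    assume "T = {0}"
    then have "ebar (ray x) T = 0" using ebar_zero[OF x] by simp
    moreover have "ebar (ray x) T = 1"
      unfolding T_def using ebar_fu[OF x ray_closed_subspace] ebar_ray[OF Fx Fx] tp_self[OF Fx] by simp
    ultimately show False by simp
  qed
  then obtain z where z: "z \<in> T" "z \<noteq> 0" using csubspace_cases[OF T] by blast
  then have "ray z = ray x" using sub ray_eq_of_mem by metis
  then have "x \<in> ray z" using ray_self by metis
  then obtain c where c: "x = scaleC c z" by (auto simp: ray_mem)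
  have "ray x \<subseteq> T"
  proof
    fix y assume "y \<in> ray x"
    then obtain d where "y = scaleC d x" by (auto simp: ray_mem)
    then have "y = scaleC (d * c) z" using c by (simp add: scaleC_scaleC)
    then show "y \<in> T" using T z unfolding csubspace_def by auto
  qed
  moreover have "T \<subseteq> ray x"
  proof
    fix y assume "y \<in> T"
    then show "y \<in> ray x"
    proof (cases "y = 0")
      case True then show ?thesis by (auto simp: ray_mem intro: exI[of _ 0])
    next
      case False then show ?thesis using sub \<open>y \<in> T\<close> by blast
    qed
  qed
  ultimately show ?thesis unfolding T_def by blast
qed

lemma F_tp: "x \<noteq> 0 \<Longrightarrow> y \<noteq> 0 \<Longrightarrow> tp (F x) (F y) = tp x y"
proof -
  assume x: "x \<noteq> 0" and y: "y \<noteq> 0"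
  have "ebar (ray y) (fu (ray (F x))) = ebar (ray (F y)) (ray (F x))"
    using ebar_fu[OF y ray_closed_subspace] .
  then have "ebar (ray y) (ray x) = tp (F x) (F y)"
    using fu_ray_F[OF x] ebar_ray[OF F_nz[OF y] F_nz[OF x]] by simp
  then show ?thesis using ebar_ray[OF y x] by simp
qed

lemma F_surj:
  assumes w: "w \<noteq> 0" and x0: "x0 \<noteq> (0::'h)"
  shows "\<exists>x. x \<noteq> 0 \<and> ray w = ray (F x)"
proof -
  have hitw: "ray (F z) = ray v" if "z \<in> fu (ray v)" "z \<noteq> 0" "v \<noteq> 0" for z v
  proof -
    have "ebar (ray (F z)) (ray v) = 1" using hit[OF ray_closed_subspace that(1,2)] .
    then have "tp v (F z) = 1" using ebar_ray[OF F_nz[OF that(2)] that(3)] by simp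
    then show ?thesis using tp_one[OF that(3) F_nz[OF that(2)]] by simp
  qed
  have zero: "cinner v (F y) = 0" if "fu (ray v) = {0}" "v \<noteq> 0" "y \<noteq> 0" for v y
  proof -
    have "ebar (ray y) (fu (ray v)) = 0" using that ebar_zero by simp
    then have "tp v (F y) = 0" using ebar_fu[OF that(3) ray_closed_subspace] ebar_ray[OF F_nz[OF that(3)] that(2)] by simp
    then show ?thesis using tp_zero_iff[OF that(2) F_nz[OF that(3)]] by simp
  qed
  show ?thesis
  proof (cases "fu (ray w) = {0}")
    case False
    then obtain z where "z \<in> fu (ray w)" "z \<noteq> 0"
      using csubspace_cases[OF fu_cs[OF ray_closed_subspace]] by blast
    then show ?thesis using hitw w by metis
  next
    case True
    define u where "u = F x0"
    have u: "u \<noteq> 0" using F_nz[OF x0] u_def by simp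
    have wu: "cinner w u = 0" using zero[OF True w x0] u_def by simp
    have ww: "cinner w w \<noteq> 0" using w by simp
    have w2: "cinner w (w + u) \<noteq> 0" using wu ww by (simp add: ci_simps)
    then have wu0: "w + u \<noteq> 0" by auto
    have uu: "cinner (w + u) u \<noteq> 0" using wu u by (simp add: ci_simps)
    show ?thesis
    proof (cases "fu (ray (w + u)) = {0}")
      case True
      then show ?thesis using zero[OF True wu0 x0] uu u_def by simp
    next
      case False
      then obtain z where z: "z \<in> fu (ray (w + u))" "z \<noteq> 0"
        using csubspace_cases[OF fu_cs[OF ray_closed_subspace]] by blast
      then have "ray (F z) = ray (w + u)" using hitw wu0 by metis
      then obtain c where "w + u = scaleC c (F z)" using ray_eq_D wu0 by metis
      then have "cinner w (w + u) = c * cinner w (F z)" by (simp add: ci_simps)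
      also have "cinner w (F z) = 0" using zero[OF \<open>fu (ray w) = {0}\<close> w z(2)] .
      finally show ?thesis using w2 by simp
    qed
  qed
qed

end


lemma cmod1sq: "(cmod (1 + z))\<^sup>2 = 1 + 2 * Re z + (cmod z)\<^sup>2"
  using cmod_power2[of "1+z"] cmod_power2[of z] by (simp add: power2_eq_square algebra_simps)

lemma cmod_eq_sq: "cmod a = cmod b \<longleftrightarrow> (cmod a)\<^sup>2 = (cmod b)\<^sup>2"
  by (metis norm_ge_zero power2_eq_iff_nonneg)

lemma re_eq_of_cmod: "cmod a = cmod s \<Longrightarrow> cmod (1 + a) = cmod (1 + s) \<Longrightarrow> Re a = Re s"
proof -
  assume h: "cmod a = cmod s" "cmod (1 + a) = cmod (1 + s)"
  then have "(cmod a)\<^sup>2 = (cmod s)\<^sup>2" "(cmod (1 + a))\<^sup>2 = (cmod (1 + s))\<^sup>2" by simp_all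
  then show ?thesis using cmod1sq[of a] cmod1sq[of s] by linarith
qed

lemma tau_cases: "cmod t = 1 \<Longrightarrow> cmod (1 + t) = cmod (1 + \<i>) \<Longrightarrow> t = \<i> \<or> t = - \<i>"
proof -
  assume a: "cmod t = 1" "cmod (1 + t) = cmod (1 + \<i>)"
  have "Re t = 0" using re_eq_of_cmod[of t "\<i>"] a by simp
  moreover have "(Re t)\<^sup>2 + (Im t)\<^sup>2 = 1" using a(1) cmod_power2[of t] by simp
  ultimately have "Im t = 1 \<or> Im t = -1" by (simp add: power2_eq_1_iff)
  then show ?thesis using \<open>Re t = 0\<close> by (auto simp: complex_eq_iff)
qed

lemma coef_det:
  assumes m: "cmod a = cmod s" and r: "cmod (1 + a) = cmod (1 + s)"
    and t: "t = \<i> \<or> t = - \<i>" and h: "cmod (1 + cnj t * a) = cmod (1 - \<i> * s)"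
  shows "a = (if t = \<i> then s else cnj s)"
proof -
  have re: "Re a = Re s" using re_eq_of_cmod[OF m r] .
  have m2: "cmod (cnj t * a) = cmod a" "cmod (- \<i> * s) = cmod s" using t by (auto simp: norm_mult)
  have h': "cmod (1 + cnj t * a) = cmod (1 + (- \<i> * s))" using h by simp
  have "Re (cnj t * a) = Re (- \<i> * s)"
    by (rule re_eq_of_cmod[OF _ h']) (use t m in \<open>auto simp: norm_mult\<close>)
  then show ?thesis using t re by (auto simp: complex_eq_iff)
qed

definition sg :: "bool \<Rightarrow> complex \<Rightarrow> complex" where "sg b = (if b then id else cnj)"

lemma sg_simps:
  "sg b (x + y) = sg b x + sg b y" "sg b (x * y) = sg b x * sg b y" "sg b (complex_of_real r) = complex_of_real r"
  "sg b (cnj x) = cnj (sg b x)" "sg b (sg b x) = x" "cmod (sg b x) = cmod x" "sg b 1 = 1" "sg b 0 = 0"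
  "sg b (x - y) = sg b x - sg b y" "sg b (- x) = - sg b x" "sg b (x / y) = sg b x / sg b y"
  "sg b \<i> = (if b then \<i> else - \<i>)"
  by (auto simp: sg_def)

lemma sg_eq0[simp]: "sg b x = 0 \<longleftrightarrow> x = 0"
  by (auto simp: sg_def)

lemma sg_cases: "sg b = id \<or> sg b = cnj" by (auto simp: sg_def)

section \<open>Dimension\<close>

lemma three_two:
  fixes p1 p2 p3 q1 q2 q3 :: complex
  shows "\<exists>a b c. (a \<noteq> 0 \<or> b \<noteq> 0 \<or> c \<noteq> 0) \<and> a * p1 + b * p2 + c * p3 = 0 \<and> a * q1 + b * q2 + c * q3 = 0"
proof (cases "p2 * q3 - p3 * q2 \<noteq> 0 \<or> p3 * q1 - p1 * q3 \<noteq> 0 \<or> p1 * q2 - p2 * q1 \<noteq> 0")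
  case True
  show ?thesis
    by (rule exI[of _ "p2 * q3 - p3 * q2"], rule exI[of _ "p3 * q1 - p1 * q3"],
        rule exI[of _ "p1 * q2 - p2 * q1"]) (use True in \<open>auto simp: algebra_simps\<close>)
next
  case False
  then have m: "p1 * q2 = p2 * q1" by auto
  show ?thesis
  proof (cases "p1 \<noteq> 0 \<or> p2 \<noteq> 0")
    case True
    show ?thesis
      by (rule exI[of _ "- p2"], rule exI[of _ p1], rule exI[of _ 0]) (use True m in \<open>auto simp: algebra_simps\<close>)
  next
    case F2: False
    show ?thesis
    proof (cases "q1 \<noteq> 0 \<or> q2 \<noteq> 0")
      case True
      show ?thesis
        by (rule exI[of _ "- q2"], rule exI[of _ q1], rule exI[of _ 0]) (use True F2 in \<open>auto simp: algebra_simps\<close>)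
    next
      case False
      show ?thesis
        by (rule exI[of _ 1], rule exI[of _ 0], rule exI[of _ 0]) (use False F2 in auto)
    qed
  qed
qed

lemma ex_perp_nz:
  assumes "cdim_gt_2 TYPE('a::complex_inner)"
  shows "\<exists>v::'a. v \<noteq> 0 \<and> cinner a v = 0 \<and> cinner b v = 0"
proof -
  have "\<exists>x y z :: 'a. \<forall>p q r. scaleC p x + scaleC q y + scaleC r z = 0 \<longrightarrow> p = 0 \<and> q = 0 \<and> r = 0"
    using assms unfolding cdim_gt_2_def by assumption
  then obtain x y z :: 'a where ind: "\<forall>p q r. scaleC p x + scaleC q y + scaleC r z = 0 \<longrightarrow> p = 0 \<and> q = 0 \<and> r = 0"
    by (elim exE)
  obtain \<alpha> \<beta> \<gamma> where n: "\<alpha> \<noteq> 0 \<or> \<beta> \<noteq> 0 \<or> \<gamma> \<noteq> 0"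
    and e1: "\<alpha> * cinner a x + \<beta> * cinner a y + \<gamma> * cinner a z = 0"
    and e2: "\<alpha> * cinner b x + \<beta> * cinner b y + \<gamma> * cinner b z = 0"
    using three_two[of "cinner a x" "cinner a y" "cinner a z" "cinner b x" "cinner b y" "cinner b z"] by auto
  define v where "v = scaleC \<alpha> x + scaleC \<beta> y + scaleC \<gamma> z"
  have "v \<noteq> 0"
  proof
    assume "v = 0"
    then have "\<alpha> = 0 \<and> \<beta> = 0 \<and> \<gamma> = 0" using ind unfolding v_def by blast
    then show False using n by blast
  qed
  moreover have "cinner a v = 0" using e1 by (simp add: v_def ci_simps)
  moreover have "cinner b v = 0" using e2 by (simp add: v_def ci_simps)
  ultimately show ?thesis by blast
qed

lemma normalize_unit: "v \<noteq> 0 \<Longrightarrow> cinner (scaleC (complex_of_real (1 / norm v)) v) (scaleC (complex_of_real (1 / norm v)) (v::'a::complex_inner)) = 1"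
proof -
  assume v: "v \<noteq> 0"
  define c where "c = complex_of_real (1 / norm v)"
  have "cinner (scaleC c v) (scaleC c v) = cnj c * c * cinner v v"
    by (simp add: cinner_scaleC_left cinner_scaleC_right)
  also have "\<dots> = complex_of_real ((1 / norm v) * (1 / norm v) * (norm v * norm v))"
    by (simp add: c_def cinner_self power2_eq_square)
  also have "\<dots> = 1" using v by simp
  finally show ?thesis unfolding c_def .
qed

lemma ex_perp_unit:
  assumes "cdim_gt_2 TYPE('a::complex_inner)"
  shows "\<exists>v::'a. cinner v v = 1 \<and> cinner a v = 0 \<and> cinner b v = 0"
proof -
  obtain v :: 'a where v: "v \<noteq> 0" "cinner a v = 0" "cinner b v = 0" using ex_perp_nz[OF assms] by blast
  show ?thesis
    by (rule exI[of _ "scaleC (complex_of_real (1 / norm v)) v"]) (use v normalize_unit[OF v(1)] in \<open>simp add: ci_simps\<close>)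
qed




locale wig =
  fixes F :: "'h::complex_inner \<Rightarrow> 'k::complex_inner"
  assumes F_nz: "x \<noteq> 0 \<Longrightarrow> F x \<noteq> 0"
    and F_tp: "x \<noteq> 0 \<Longrightarrow> y \<noteq> 0 \<Longrightarrow> tp (F x) (F y) = tp x y"
    and F_scale: "x \<noteq> 0 \<Longrightarrow> c \<noteq> 0 \<Longrightarrow> ray (F (scaleC c x)) = ray (F x)"
    and dim: "cdim_gt_2 TYPE('h)"
begin

lemma tp_F_rays: "x \<noteq> 0 \<Longrightarrow> y \<noteq> 0 \<Longrightarrow> a \<in> ray (F x) \<Longrightarrow> a \<noteq> 0 \<Longrightarrow> b \<in> ray (F y) \<Longrightarrow> b \<noteq> 0
  \<Longrightarrow> tp a b = tp x y"
  using tp_ray F_tp by metis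

end

lemma cinner_perp_sym: "cinner a b = 0 \<Longrightarrow> cinner b (a::'a::complex_inner) = 0"
  by (metis cinner_cnj complex_cnj_zero)

lemma unit_nz: "cinner a a = 1 \<Longrightarrow> (a::'a::complex_inner) \<noteq> 0"
  by auto

locale wig2 = wig F for F :: "'h::complex_inner \<Rightarrow> 'k::complex_inner" +
  fixes e :: 'h and e' :: 'k
  assumes e1: "cinner e e = 1" and e'1: "cinner e' e' = 1" and e'_ray: "e' \<in> ray (F e)"
begin

lemma e_nz: "e \<noteq> 0" and e'_nz: "e' \<noteq> 0" and ne: "norm e = 1" and ne': "norm e' = 1"
  using e1 e'1 norm_one_of_cinner by auto

definition g :: "'h \<Rightarrow> 'k" where "g x = scaleC (1 / cinner e' (F x)) (F x)"

lemma A_nz: "cinner e x = 1 \<Longrightarrow> x \<noteq> 0" by auto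

lemma tp_e: "cinner e x = 1 \<Longrightarrow> tp e x = 1 / (norm x)\<^sup>2"
  using ne by (simp add: tp_def)

lemma eF: assumes "cinner e x = 1" shows "cinner e' (F x) \<noteq> 0"
proof -
  have x: "x \<noteq> 0" using assms by auto
  have "tp e' (F x) = tp e x" using tp_F_rays[OF e_nz x e'_ray e'_nz ray_self F_nz[OF x]] .
  also have "\<dots> \<noteq> 0" using tp_e[OF assms] x by simp
  finally show ?thesis using tp_zero_iff[OF e'_nz F_nz[OF x]] by simp
qed

lemma g_props: assumes "cinner e x = 1"
  shows "cinner e' (g x) = 1" "g x \<in> ray (F x)" "g x \<noteq> 0" "norm (g x) = norm x"
proof -
  have x: "x \<noteq> 0" using assms by auto
  show 1: "cinner e' (g x) = 1" using eF[OF assms] by (simp add: g_def cinner_scaleC_right)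
  show 2: "g x \<in> ray (F x)" by (auto simp: g_def ray_mem)
  show 3: "g x \<noteq> 0" using 1 by auto
  have "tp e' (g x) = tp e x" using tp_F_rays[OF e_nz x e'_ray e'_nz 2 3] .
  then have "1 / (norm (g x))\<^sup>2 = 1 / (norm x)\<^sup>2" using tp_e[OF assms] 1 ne' by (simp add: tp_def)
  then have "(norm (g x))\<^sup>2 = (norm x)\<^sup>2" by simp
  then show "norm (g x) = norm x" by (simp add: power2_eq_iff_nonneg)
qed

lemma g_tp: "y \<noteq> 0 \<Longrightarrow> a \<in> ray (F y) \<Longrightarrow> a \<noteq> 0 \<Longrightarrow> cinner e x = 1 \<Longrightarrow> tp a (g x) = tp y x"
  using tp_F_rays g_props A_nz by metis

lemma g_cmod: "cinner e x = 1 \<Longrightarrow> cinner e y = 1 \<Longrightarrow> cmod (cinner (g x) (g y)) = cmod (cinner x y)"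
  by (rule tp_cmod[OF g_tp[OF A_nz g_props(2,3)]]) (auto simp: g_props A_nz)

definition W :: "'h \<Rightarrow> 'k" where "W p = g (e + p) - e'"

lemma eA: "cinner e p = 0 \<Longrightarrow> cinner e (e + p) = 1"
  using e1 by (simp add: ci_simps)

lemma gW: "g (e + p) = e' + W p" by (simp add: W_def)

lemma W_perp: "cinner e p = 0 \<Longrightarrow> cinner e' (W p) = 0"
  using g_props(1)[OF eA] e'1 by (simp add: W_def ci_simps)

lemma W_perp': "cinner e p = 0 \<Longrightarrow> cinner (W p) e' = 0"
  using W_perp cinner_perp_sym by blast

lemma W_norm: assumes p: "cinner e p = 0" shows "norm (W p) = norm p"
proof -
  have "1 + (norm (W p))\<^sup>2 = (norm (e' + W p))\<^sup>2" using pyth[OF W_perp[OF p]] ne' by simp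
  also have "\<dots> = (norm (e + p))\<^sup>2" using g_props(4)[OF eA[OF p]] gW by simp
  also have "\<dots> = 1 + (norm p)\<^sup>2" using pyth[OF p] ne by simp
  finally show ?thesis by (simp add: power2_eq_iff_nonneg)
qed

lemma W_self: "cinner e p = 0 \<Longrightarrow> cinner (W p) (W p) = cinner p p"
  by (simp add: cinner_self W_norm)

lemma W_zero: "W 0 = 0"
  using W_norm[of 0] by simp

lemma W_ip: assumes p: "cinner e p = 0" and q: "cinner e q = 0"
  shows "cmod (1 + cinner (W p) (W q)) = cmod (1 + cinner p q)"
proof -
  have "cinner (e' + W p) (e' + W q) = 1 + cinner (W p) (W q)"
    using e'1 W_perp[OF q] W_perp'[OF p] by (simp add: ci_simps)
  moreover have "cinner (e + p) (e + q) = 1 + cinner p q"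
    using e1 q cinner_perp_sym[OF p] by (simp add: ci_simps)
  ultimately show ?thesis using g_cmod[OF eA[OF p] eA[OF q]] gW by simp
qed

lemma W_unit: assumes u1: "cinner u u = 1" and eu: "cinner e u = 0"
  shows "W u \<in> ray (F u)" "cinner (W u) (W u) = 1" "W u \<noteq> 0"
proof -
  have u: "u \<noteq> 0" using u1 by auto
  have Fu: "F u \<noteq> 0" using F_nz[OF u] .
  define w where "w = scaleC (complex_of_real (1 / norm (F u))) (F u)"
  have w1: "cinner w w = 1" unfolding w_def by (rule normalize_unit[OF Fu])
  have wnz: "w \<noteq> 0" using w1 by auto
  have wray: "ray w = ray (F u)" unfolding w_def by (rule ray_scale) (use Fu in simp)
  have wm: "w \<in> ray (F u)" using wray ray_self by metis
  have "tp e' w = tp e u" using tp_F_rays[OF e_nz u e'_ray e'_nz wm wnz] .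
  then have e'w: "cinner e' w = 0" using eu tp_zero_iff[OF e'_nz wnz] by (simp add: tp_def)
  define y where "y = g (e + u)"
  have eu1: "cinner e (e + u) = 1" using eA[OF eu] .
  have eunz: "e + u \<noteq> 0" using eu1 by auto
  note gp = g_props[OF eu1, folded y_def]
  have "tp w y = tp u (e + u)" using tp_F_rays[OF u eunz wm wnz gp(2,3)] .
  then have cw: "cmod (cinner w y) = cmod (cinner u (e + u))"
    using tp_cmod norm_one_of_cinner[OF w1] norm_one_of_cinner[OF u1] gp(4) u eunz by metis
  have "cinner u (e + u) = 1" using u1 cinner_perp_sym[OF eu] by (simp add: ci_simps)
  then have cw1: "cmod (cinner w y) = 1" using cw by simp
  have "(norm y)\<^sup>2 = (norm (e + u))\<^sup>2" using gp(4) by simp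
  also have "\<dots> = 2" using pyth[OF eu] ne norm_one_of_cinner[OF u1] by simp
  finally have "(norm y)\<^sup>2 = (cmod (cinner e' y))\<^sup>2 + (cmod (cinner w y))\<^sup>2"
    using gp(1) cw1 by simp
  from bessel2[OF e'1 w1 e'w this] have "y = e' + scaleC (cinner w y) w"
    using gp(1) by (simp add: scaleC_one)
  then have "W u = scaleC (cinner w y) w" unfolding W_def y_def[symmetric] by (metis add_diff_cancel_left')
  then have "W u \<in> ray w" by (auto simp: ray_mem)
  then show "W u \<in> ray (F u)" using wray by simp
  show "cinner (W u) (W u) = 1" using W_self[OF eu] u1 by simp
  then show "W u \<noteq> 0" by auto
qed


definition onp :: "'h \<Rightarrow> 'h \<Rightarrow> bool" where
  "onp u v \<longleftrightarrow> cinner u u = 1 \<and> cinner v v = 1 \<and> cinner u v = 0 \<and> cinner e u = 0 \<and> cinner e v = 0"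

lemma onp_sym: "onp u v \<Longrightarrow> onp v u"
  unfolding onp_def using cinner_perp_sym by blast

lemma W_orth: assumes "onp u v" shows "cinner (W u) (W v) = 0"
proof -
  have a: "cinner u u = 1" "cinner v v = 1" "cinner u v = 0" "cinner e u = 0" "cinner e v = 0"
    using assms by (auto simp: onp_def)
  have "tp (W u) (W v) = tp u v"
    using tp_F_rays[OF unit_nz[OF a(1)] unit_nz[OF a(2)] W_unit(1)[OF a(1,4)] W_unit(3)[OF a(1,4)]
        W_unit(1)[OF a(2,5)] W_unit(3)[OF a(2,5)]] .
  then show ?thesis using a tp_zero_iff[OF W_unit(3)[OF a(1,4)] W_unit(3)[OF a(2,5)]]
    by (simp add: tp_def)
qed

lemma L1: fixes s t :: complex assumes "onp u v"
  defines "q \<equiv> scaleC s u + scaleC t v"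
  shows "W q = scaleC (cinner (W u) (W q)) (W u) + scaleC (cinner (W v) (W q)) (W v)"
    and "cmod (cinner (W u) (W q)) = cmod s"
proof -
  have a: "cinner u u = 1" "cinner v v = 1" "cinner u v = 0" "cinner e u = 0" "cinner e v = 0"
    using assms by (auto simp: onp_def)
  have a': "cinner v u = 0" "cinner u e = 0" "cinner v e = 0" using a cinner_perp_sym by auto
  have eq: "cinner e q = 0" using a by (simp add: q_def ci_simps)
  define x where "x = e + q"
  have ex: "cinner e x = 1" unfolding x_def by (rule eA[OF eq])
  have xnz: "x \<noteq> 0" using ex by auto
  define y where "y = g x"
  note gp = g_props[OF ex, folded y_def]
  have y: "y = e' + W q" unfolding y_def x_def by (rule gW)
  have "complex_of_real ((norm x)\<^sup>2) = cinner x x" by (simp add: cinner_self)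
  also have "\<dots> = 1 + cnj s * s + cnj t * t"
    using a a' e1 cinner_perp_sym[OF eq] by (simp add: x_def q_def ci_simps)
  also have "\<dots> = complex_of_real (1 + (cmod s)\<^sup>2 + (cmod t)\<^sup>2)"
    using complex_norm_square[of s] complex_norm_square[of t] by (simp add: algebra_simps)
  finally have nx: "(norm x)\<^sup>2 = 1 + (cmod s)\<^sup>2 + (cmod t)\<^sup>2" by (simp only: of_real_eq_iff)
  have coef: "cmod (cinner (W w) y) = cmod (cinner w x)" if w1: "cinner w w = 1" and ew: "cinner e w = 0" for w
  proof -
    have "tp (W w) y = tp w x"
      using tp_F_rays[OF unit_nz[OF w1] xnz W_unit(1)[OF w1 ew] W_unit(3)[OF w1 ew] gp(2,3)] .
    then show ?thesis using tp_cmod norm_one_of_cinner[OF W_unit(2)[OF w1 ew]] norm_one_of_cinner[OF w1]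
        gp(4) unit_nz[OF w1] xnz by metis
  qed
  have ux: "cinner u x = s" using a a' by (simp add: x_def q_def ci_simps)
  have vx: "cinner v x = t" using a a' by (simp add: x_def q_def ci_simps)
  have cu: "cmod (cinner (W u) y) = cmod s" using coef[OF a(1,4)] ux by simp
  have cv: "cmod (cinner (W v) y) = cmod t" using coef[OF a(2,5)] vx by simp
  have "(norm y)\<^sup>2 = (cmod (cinner e' y))\<^sup>2 + (cmod (cinner (W u) y))\<^sup>2 + (cmod (cinner (W v) y))\<^sup>2"
    using gp(1,4) nx cu cv by simp
  from bessel3[OF e'1 W_unit(2)[OF a(1,4)] W_unit(2)[OF a(2,5)] W_perp[OF a(4)] W_perp[OF a(5)]
      W_orth[OF assms(1)] this]
  have yy: "y = e' + scaleC (cinner (W u) y) (W u) + scaleC (cinner (W v) y) (W v)"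
    using gp(1) by (simp add: scaleC_one)
  have iu: "cinner (W u) y = cinner (W u) (W q)" using y W_perp'[OF a(4)] by (simp add: ci_simps)
  have iv: "cinner (W v) y = cinner (W v) (W q)" using y W_perp'[OF a(5)] by (simp add: ci_simps)
  have "e' + W q = e' + (scaleC (cinner (W u) (W q)) (W u) + scaleC (cinner (W v) (W q)) (W v))"
    using yy y iu iv by (simp add: add.assoc)
  then show "W q = scaleC (cinner (W u) (W q)) (W u) + scaleC (cinner (W v) (W q)) (W v)"
    by (rule add_left_imp_eq)
  show "cmod (cinner (W u) (W q)) = cmod s" using cu iu by simp
qed

definition lin :: "'h \<Rightarrow> bool" where "lin u \<longleftrightarrow> W (scaleC \<i> u) = scaleC \<i> (W u)"

lemma L2: assumes "onp u v"
  shows "cinner (W u) (W (scaleC s u + scaleC t v)) = sg (lin u) s"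
proof -
  have a: "cinner u u = 1" "cinner v v = 1" "cinner u v = 0" "cinner e u = 0" "cinner e v = 0"
    using assms by (auto simp: onp_def)
  have a': "cinner v u = 0" "cinner u e = 0" "cinner v e = 0" using a cinner_perp_sym by auto
  define \<tau> where "\<tau> = cinner (W u) (W (scaleC \<i> u))"
  have l1: "W (scaleC \<i> u + scaleC 0 v) = scaleC (cinner (W u) (W (scaleC \<i> u + scaleC 0 v))) (W u)
      + scaleC (cinner (W v) (W (scaleC \<i> u + scaleC 0 v))) (W v)"
    "cmod (cinner (W v) (W (scaleC 0 v + scaleC \<i> u))) = cmod 0"
    using L1[OF assms, of \<i> 0] L1[OF onp_sym[OF assms], of 0 \<i>] by auto
  have Wi: "W (scaleC \<i> u) = scaleC \<tau> (W u)" using l1 by (simp add: \<tau>_def add.commute)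
  have eiu: "cinner e (scaleC \<i> u) = 0" using a by (simp add: ci_simps)
  have "cmod \<tau> = cmod \<i>" using L1(2)[OF assms, of \<i> 0] by (simp add: \<tau>_def)
  moreover have "cmod (1 + \<tau>) = cmod (1 + \<i>)"
    using W_ip[OF a(4) eiu] a by (simp add: \<tau>_def ci_simps)
  ultimately have tc: "\<tau> = \<i> \<or> \<tau> = - \<i>" using tau_cases by simp
  have Wunz: "W u \<noteq> 0" using W_unit(3)[OF a(1,4)] .
  have linu: "lin u \<longleftrightarrow> \<tau> = \<i>"
  proof
    assume "lin u"
    then have "scaleC \<tau> (W u) = scaleC \<i> (W u)" using Wi by (simp add: lin_def)
    then show "\<tau> = \<i>" using scaleC_cancel Wunz by blast
  qed (simp add: lin_def Wi)
  define q where "q = scaleC s u + scaleC t v"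
  define \<alpha> where "\<alpha> = cinner (W u) (W q)"
  have eq: "cinner e q = 0" using a by (simp add: q_def ci_simps)
  have m: "cmod \<alpha> = cmod s" using L1(2)[OF assms] by (simp add: \<alpha>_def q_def)
  have r: "cmod (1 + \<alpha>) = cmod (1 + s)"
    using W_ip[OF a(4) eq] a by (simp add: \<alpha>_def q_def ci_simps)
  have "cmod (1 + cinner (W (scaleC \<i> u)) (W q)) = cmod (1 + cinner (scaleC \<i> u) q)"
    using W_ip[OF eiu eq] .
  then have h: "cmod (1 + cnj \<tau> * \<alpha>) = cmod (1 - \<i> * s)"
    using a by (simp add: Wi \<alpha>_def q_def ci_simps mult.commute)
  have "\<alpha> = (if \<tau> = \<i> then s else cnj s)" by (rule coef_det[OF m r tc h])
  then show ?thesis using linu by (simp add: \<alpha>_def q_def sg_def)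
qed

lemma L3: assumes "onp u v"
  shows "W (scaleC s u + scaleC t v) = scaleC (sg (lin u) s) (W u) + scaleC (sg (lin v) t) (W v)"
proof -
  have "cinner (W v) (W (scaleC s u + scaleC t v)) = sg (lin v) t"
    using L2[OF onp_sym[OF assms], of t s] by (simp add: add.commute)
  then show ?thesis using L1(1)[OF assms, of s t] L2[OF assms, of s t] by simp
qed


lemma ex_onp: "cinner u u = 1 \<Longrightarrow> cinner e u = 0 \<Longrightarrow> \<exists>v. onp u v"
  using ex_perp_unit[OF dim, of e u] by (auto simp: onp_def)

lemma L1D: assumes "cinner u u = 1" "cinner e u = 0"
  shows "W (scaleC s u) = scaleC (sg (lin u) s) (W u)"
proof -
  obtain v where "onp u v" using ex_onp assms by blast
  from L3[OF this, of s 0] show ?thesis by (simp add: sg_simps)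
qed

lemma coef_eq: assumes "onp u v"
  and "scaleC a (W u) + scaleC b (W v) = scaleC c (W u) + scaleC d (W v)"
  shows "a = c" "b = d"
proof -
  have a: "cinner u u = 1" "cinner v v = 1" "cinner u v = 0" "cinner e u = 0" "cinner e v = 0"
    using assms by (auto simp: onp_def)
  have o: "cinner (W u) (W v) = 0" "cinner (W v) (W u) = 0"
    using W_orth[OF assms(1)] cinner_perp_sym by auto
  have u1: "cinner (W u) (W u) = 1" "cinner (W v) (W v) = 1" using W_unit(2) a by auto
  from arg_cong[OF assms(2), of "cinner (W u)"] show "a = c" using o u1 by (simp add: ci_simps)
  from arg_cong[OF assms(2), of "cinner (W v)"] show "b = d" using o u1 by (simp add: ci_simps)
qed

lemma sg_i_inj: "sg a \<i> = sg b \<i> \<Longrightarrow> a = b"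
  by (auto simp: sg_simps split: if_splits simp: complex_eq_iff)

lemma lin_onp: assumes "onp u v" shows "lin u = lin v"
proof -
  have a: "cinner u u = 1" "cinner v v = 1" "cinner u v = 0" "cinner e u = 0" "cinner e v = 0"
    using assms by (auto simp: onp_def)
  have a': "cinner v u = 0" using a cinner_perp_sym by auto
  define r where "r = complex_of_real (1 / sqrt 2)"
  define w where "w = scaleC r u + scaleC r v"
  have "cinner w w = cnj r * r * 2" using a a' by (simp add: w_def ci_simps algebra_simps)
  also have "\<dots> = 1"
  proof -
    have s2: "(complex_of_real (sqrt 2))\<^sup>2 = 2" by (simp flip: of_real_power)
    show ?thesis by (simp add: r_def power2_eq_square[symmetric] power_divide s2)
  qed
  finally have w1: "cinner w w = 1" .
  have ew: "cinner e w = 0" using a by (simp add: w_def ci_simps)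
  have Ww: "W w = scaleC r (W u) + scaleC r (W v)"
    using L3[OF assms, of r r] by (simp add: w_def r_def sg_simps)
  have "scaleC \<i> u + scaleC \<i> v = scaleC (\<i> * complex_of_real (sqrt 2)) w"
    by (simp add: w_def r_def scaleC_add_right scaleC_scaleC)
  then have "W (scaleC \<i> u + scaleC \<i> v) = scaleC (sg (lin w) (\<i> * complex_of_real (sqrt 2))) (W w)"
    using L1D[OF w1 ew] by simp
  also have "\<dots> = scaleC (sg (lin w) \<i>) (W u) + scaleC (sg (lin w) \<i>) (W v)"
    by (simp add: Ww sg_simps scaleC_add_right scaleC_scaleC r_def)
  finally have "scaleC (sg (lin u) \<i>) (W u) + scaleC (sg (lin v) \<i>) (W v)
      = scaleC (sg (lin w) \<i>) (W u) + scaleC (sg (lin w) \<i>) (W v)"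
    using L3[OF assms, of \<i> \<i>] by simp
  from coef_eq[OF assms this] show ?thesis using sg_i_inj by metis
qed


definition u0 :: 'h where "u0 = (SOME u. cinner u u = 1 \<and> cinner e u = 0)"

lemma u0: "cinner u0 u0 = 1" "cinner e u0 = 0"
proof -
  have "\<exists>u. cinner u u = 1 \<and> cinner e u = 0" using ex_perp_unit[OF dim, of e e] by auto
  then have "cinner u0 u0 = 1 \<and> cinner e u0 = 0" unfolding u0_def by (rule someI_ex)
  then show "cinner u0 u0 = 1" "cinner e u0 = 0" by auto
qed

definition \<sigma> :: "complex \<Rightarrow> complex" where "\<sigma> = sg (lin u0)"

lemma normalize: assumes "p \<noteq> 0"
  shows "cinner (scaleC (complex_of_real (1 / norm p)) p) (scaleC (complex_of_real (1 / norm p)) p) = 1"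
    "p = scaleC (complex_of_real (norm p)) (scaleC (complex_of_real (1 / norm p)) p)"
  using normalize_unit[OF assms] apply simp
  using assms by (simp add: scaleC_scaleC scaleC_one flip: of_real_mult)

lemma W1_global: assumes u1: "cinner u u = 1" and eu: "cinner e u = 0"
  shows "W (scaleC s u) = scaleC (\<sigma> s) (W u)"
proof -
  define a where "a = cinner u0 u"
  define r where "r = u - scaleC a u0"
  have ur: "u = scaleC a u0 + r" by (simp add: r_def)
  have u0r: "cinner u0 r = 0" using u0 by (simp add: r_def a_def ci_simps)
  have er: "cinner e r = 0" using u0 eu by (simp add: r_def ci_simps)
  note W0 = L1D[OF u0, folded \<sigma>_def]
  show ?thesis
  proof (cases "r = 0")
    case True
    then have "W (scaleC s u) = W (scaleC (s * a) u0)" using ur by (simp add: scaleC_scaleC)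
    also have "\<dots> = scaleC (\<sigma> s) (W (scaleC a u0))" using W0 by (simp add: \<sigma>_def sg_simps scaleC_scaleC)
    finally show ?thesis using ur True by simp
  next
    case False
    define v where "v = scaleC (complex_of_real (1 / norm r)) r"
    define b where "b = complex_of_real (norm r)"
    have v1: "cinner v v = 1" and rv: "r = scaleC b v" using normalize[OF False] by (simp_all add: v_def b_def)
    have "cinner u0 v = 0" "cinner e v = 0" using u0r er by (simp_all add: v_def ci_simps)
    then have on: "onp u0 v" using u0 v1 by (simp add: onp_def)
    have lv: "lin v = lin u0" using lin_onp[OF on] by simp
    have "W (scaleC s u) = W (scaleC (s * a) u0 + scaleC (s * b) v)"
      using ur rv by (simp add: scaleC_scaleC scaleC_add_right)
    also have "\<dots> = scaleC (\<sigma> (s * a)) (W u0) + scaleC (\<sigma> (s * b)) (W v)"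
      using L3[OF on] lv by (simp add: \<sigma>_def)
    also have "\<dots> = scaleC (\<sigma> s) (scaleC (\<sigma> a) (W u0) + scaleC (\<sigma> b) (W v))"
      by (simp add: \<sigma>_def sg_simps scaleC_scaleC scaleC_add_right)
    also have "scaleC (\<sigma> a) (W u0) + scaleC (\<sigma> b) (W v) = W u"
      using L3[OF on, of a b] lv ur rv by (simp add: \<sigma>_def)
    finally show ?thesis .
  qed
qed

lemma lin_global: "cinner u u = 1 \<Longrightarrow> cinner e u = 0 \<Longrightarrow> lin u = lin u0"
  using W1_global[of u \<i>] L1D[of u \<i>] W_unit(3)[of u] scaleC_cancel sg_i_inj
  by (metis \<sigma>_def)

lemma L3_global: "onp u v \<Longrightarrow> W (scaleC s u + scaleC t v) = scaleC (\<sigma> s) (W u) + scaleC (\<sigma> t) (W v)"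
  using L3 lin_global by (simp add: onp_def \<sigma>_def)

lemma W_scale: assumes p: "cinner e p = 0" shows "W (scaleC c p) = scaleC (\<sigma> c) (W p)"
proof (cases "p = 0")
  case True then show ?thesis by (simp add: W_zero)
next
  case False
  define u where "u = scaleC (complex_of_real (1 / norm p)) p"
  define n where "n = complex_of_real (norm p)"
  have u1: "cinner u u = 1" and pu: "p = scaleC n u" using normalize[OF False] by (simp_all add: u_def n_def)
  have eu: "cinner e u = 0" using p by (simp add: u_def ci_simps)
  have "W (scaleC c p) = W (scaleC (c * n) u)" using pu by (simp add: scaleC_scaleC)
  also have "\<dots> = scaleC (\<sigma> c) (scaleC (\<sigma> n) (W u))"
    using W1_global[OF u1 eu] by (simp add: \<sigma>_def sg_simps scaleC_scaleC)
  also have "scaleC (\<sigma> n) (W u) = W p" using W1_global[OF u1 eu] pu by simp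
  finally show ?thesis .
qed

lemma W_add: assumes p: "cinner e p = 0" and q: "cinner e q = 0" shows "W (p + q) = W p + W q"
proof (cases "p = 0")
  case True then show ?thesis by (simp add: W_zero)
next
  case False
  define u where "u = scaleC (complex_of_real (1 / norm p)) p"
  define n where "n = complex_of_real (norm p)"
  have u1: "cinner u u = 1" and pu: "p = scaleC n u" using normalize[OF False] by (simp_all add: u_def n_def)
  have eu: "cinner e u = 0" using p by (simp add: u_def ci_simps)
  define l where "l = cinner u q"
  define r where "r = q - scaleC l u"
  have qr: "q = scaleC l u + r" by (simp add: r_def)
  have ur: "cinner u r = 0" using u1 by (simp add: r_def l_def ci_simps)
  have er: "cinner e r = 0" using eu q by (simp add: r_def ci_simps)
  note W1 = W1_global[OF u1 eu]
  show ?thesis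
  proof (cases "r = 0")
    case True
    then have "p + q = scaleC (n + l) u" using pu qr by (simp add: scaleC_add_left)
    then have "W (p + q) = scaleC (\<sigma> (n + l)) (W u)" using W1 by simp
    also have "\<dots> = scaleC (\<sigma> n) (W u) + scaleC (\<sigma> l) (W u)"
      by (simp add: \<sigma>_def sg_simps scaleC_add_left)
    also have "\<dots> = W p + W q" using W1 pu qr True by simp
    finally show ?thesis .
  next
    case False
    define v where "v = scaleC (complex_of_real (1 / norm r)) r"
    define m where "m = complex_of_real (norm r)"
    have v1: "cinner v v = 1" and rv: "r = scaleC m v" using normalize[OF False] by (simp_all add: v_def m_def)
    have "cinner u v = 0" "cinner e v = 0" using ur er by (simp_all add: v_def ci_simps)
    then have on: "onp u v" using u1 v1 eu by (simp add: onp_def)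
    have "p + q = scaleC (n + l) u + scaleC m v" using pu qr rv by (simp add: scaleC_add_left add.assoc)
    then have "W (p + q) = scaleC (\<sigma> (n + l)) (W u) + scaleC (\<sigma> m) (W v)"
      using L3_global[OF on] by simp
    moreover have "W q = scaleC (\<sigma> l) (W u) + scaleC (\<sigma> m) (W v)"
      using L3_global[OF on] qr rv by simp
    moreover have "W p = scaleC (\<sigma> n) (W u)" using W1 pu by simp
    ultimately show ?thesis by (simp add: \<sigma>_def sg_simps scaleC_add_left add.assoc)
  qed
qed


declare scaleC_one[simp]

lemma \<sigma>_simps: "\<sigma> (x + y) = \<sigma> x + \<sigma> y" "\<sigma> (x * y) = \<sigma> x * \<sigma> y"
  "\<sigma> (complex_of_real r) = complex_of_real r" "\<sigma> (cnj x) = cnj (\<sigma> x)" "\<sigma> (\<sigma> x) = x"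
  "cmod (\<sigma> x) = cmod x" "\<sigma> 1 = 1" "\<sigma> 0 = 0" "\<sigma> (x - y) = \<sigma> x - \<sigma> y" "\<sigma> (- x) = - \<sigma> x"
  "\<sigma> (x / y) = \<sigma> x / \<sigma> y"
  by (simp_all add: \<sigma>_def sg_simps)

lemma \<sigma>_cases: "\<sigma> = id \<or> \<sigma> = cnj" by (simp add: \<sigma>_def sg_cases)

lemma W_inner: assumes p: "cinner e p = 0" and q: "cinner e q = 0"
  shows "cinner (W p) (W q) = \<sigma> (cinner p q)"
proof -
  define X where "X = cinner (W p) (W q)"
  define Y where "Y = cinner p q"
  have X': "cinner (W q) (W p) = cnj X" by (simp add: X_def cinner_cnj)
  have Y': "cinner q p = cnj Y" by (simp add: Y_def cinner_cnj)
  have pp: "cinner (W p) (W p) = cinner p p" and qq: "cinner (W q) (W q) = cinner q q"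
    using W_self p q by auto
  have epq: "cinner e (p + q) = 0" using p q by (simp add: ci_simps)
  have "cinner (W (p + q)) (W (p + q)) = cinner (p + q) (p + q)" by (rule W_self[OF epq])
  then have E1: "X + cnj X = Y + cnj Y"
    using W_add[OF p q] pp qq X' Y' by (simp add: ci_simps X_def[symmetric] Y_def[symmetric] algebra_simps)
  have eiq: "cinner e (scaleC \<i> q) = 0" using q by (simp add: ci_simps)
  have epiq: "cinner e (p + scaleC \<i> q) = 0" using p eiq by (simp add: ci_simps)
  have si: "cnj (\<sigma> \<i>) * \<sigma> \<i> = 1" using \<sigma>_cases by auto
  have "cinner (W (p + scaleC \<i> q)) (W (p + scaleC \<i> q)) = cinner (p + scaleC \<i> q) (p + scaleC \<i> q)"
    by (rule W_self[OF epiq])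
  then have "cinner (W p) (W p) + \<sigma> \<i> * X + cnj (\<sigma> \<i>) * cnj X + cnj (\<sigma> \<i>) * \<sigma> \<i> * cinner (W q) (W q)
      = cinner p p + \<i> * Y + cnj \<i> * cnj Y + cnj \<i> * \<i> * cinner q q"
    using W_add[OF p eiq] W_scale[OF q] X' Y'
    by (simp add: ci_simps X_def[symmetric] Y_def[symmetric] algebra_simps)
  then have E2: "\<sigma> \<i> * X + cnj (\<sigma> \<i>) * cnj X = \<i> * Y + cnj \<i> * cnj Y"
    using pp qq si by simp
  from \<sigma>_cases show ?thesis
  proof
    assume "\<sigma> = id"
    then show ?thesis using E1 E2 by (simp add: X_def[symmetric] Y_def[symmetric] complex_eq_iff)
  next
    assume "\<sigma> = cnj"
    then show ?thesis using E1 E2 by (simp add: X_def[symmetric] Y_def[symmetric] complex_eq_iff)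
  qed
qed

definition P :: "'h \<Rightarrow> 'h" where "P x = x - scaleC (cinner e x) e"

lemma P_perp: "cinner e (P x) = 0"
  using e1 by (simp add: P_def ci_simps)

definition U :: "'h \<Rightarrow> 'k" where "U x = scaleC (\<sigma> (cinner e x)) e' + W (P x)"

lemma U_add: "U (x + y) = U x + U y"
proof -
  have "P (x + y) = P x + P y" by (simp add: P_def ci_simps scaleC_add_left algebra_simps)
  then show ?thesis using W_add[OF P_perp P_perp]
    by (simp add: U_def ci_simps \<sigma>_simps scaleC_add_left algebra_simps)
qed

lemma U_scale: "U (scaleC c x) = scaleC (\<sigma> c) (U x)"
proof -
  have "P (scaleC c x) = scaleC c (P x)" by (simp add: P_def ci_simps scaleC_diff_right scaleC_scaleC)
  then show ?thesis using W_scale[OF P_perp]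
    by (simp add: U_def ci_simps \<sigma>_simps scaleC_add_right scaleC_scaleC)
qed

lemma U_inner: "cinner (U x) (U y) = \<sigma> (cinner x y)"
proof -
  have "cinner (P x) (P y) = cinner x y - cnj (cinner e x) * cinner e y"
    using e1 by (simp add: P_def ci_simps cinner_cnj algebra_simps)
  moreover have "cinner (U x) (U y) = cnj (\<sigma> (cinner e x)) * \<sigma> (cinner e y) + cinner (W (P x)) (W (P y))"
    using e'1 W_perp[OF P_perp] W_perp'[OF P_perp] by (simp add: U_def ci_simps)
  ultimately show ?thesis using W_inner[OF P_perp P_perp] by (simp add: \<sigma>_simps)
qed

lemma U_self: "cinner (U x) (U x) = cinner x x"
proof -
  have "\<sigma> (cinner x x) = cinner x x" using cinner_self[of x] \<sigma>_simps(3) by metis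
  then show ?thesis using U_inner[of x x] by simp
qed

lemma U_norm: "norm (U x) = norm x"
  using U_self[of x] by (metis cinner_self norm_ge_zero of_real_eq_iff power2_eq_iff_nonneg)

lemma U_ray: assumes x: "x \<noteq> 0" shows "U x \<in> ray (F x)"
proof (cases "cinner e x = 0")
  case False
  define a where "a = cinner e x"
  have a: "a \<noteq> 0" using False a_def by simp
  define x' where "x' = scaleC (1 / a) x"
  have ex': "cinner e x' = 1" using a by (simp add: x'_def ci_simps a_def)
  have Px': "P x = scaleC a (P x')" using a by (simp add: P_def x'_def ci_simps scaleC_diff_right scaleC_scaleC a_def scaleC_one)
  have x'e: "e + P x' = x'" using ex' by (simp add: P_def)
  have gx': "g x' = e' + W (P x')" using gW[of "P x'"] x'e by simp
  have "U x = scaleC (\<sigma> a) e' + scaleC (\<sigma> a) (W (P x'))"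
    using W_scale[OF P_perp] Px' by (simp add: U_def a_def)
  also have "\<dots> = scaleC (\<sigma> a) (g x')" by (simp add: gx' scaleC_add_right)
  finally have Ux: "U x = scaleC (\<sigma> a) (g x')" .
  have "ray (F x') = ray (F x)" unfolding x'_def by (rule F_scale[OF x]) (use a in simp)
  then have "g x' \<in> ray (F x)" using g_props(2)[OF ex'] by simp
  then obtain c where "g x' = scaleC c (F x)" by (auto simp: ray_mem)
  then show ?thesis using Ux by (auto simp: ray_mem scaleC_scaleC)
next
  case True
  then have Px: "P x = x" by (simp add: P_def)
  have Ux: "U x = W x" using True Px by (simp add: U_def \<sigma>_simps)
  define u where "u = scaleC (complex_of_real (1 / norm x)) x"
  define n where "n = complex_of_real (norm x)"
  have u1: "cinner u u = 1" and xu: "x = scaleC n u" using normalize[OF x] by (simp_all add: u_def n_def)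
  have eu: "cinner e u = 0" using True by (simp add: u_def ci_simps)
  have n: "n \<noteq> 0" using x n_def by simp
  have "W x = scaleC (\<sigma> n) (W u)" using W1_global[OF u1 eu] xu by simp
  moreover obtain c where "W u = scaleC c (F u)" using W_unit(1)[OF u1 eu] by (auto simp: ray_mem)
  moreover have "ray (F x) = ray (F u)" using xu F_scale[OF unit_nz[OF u1] n] by simp
  ultimately have "U x \<in> ray (F u)" using Ux by (auto simp: ray_mem scaleC_scaleC)
  then show ?thesis using \<open>ray (F x) = ray (F u)\<close> by simp
qed

lemma U_ray_eq: "x \<noteq> 0 \<Longrightarrow> ray (U x) = ray (F x)"
  using U_ray ray_eq_of_mem U_norm by (metis norm_eq_zero)

lemma U_zero: "U 0 = 0"
  using U_scale[of 0 0] by (simp add: \<sigma>_simps)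

lemma U_semiunitary:
  assumes surj: "\<And>w. w \<noteq> 0 \<Longrightarrow> \<exists>x. x \<noteq> 0 \<and> ray w = ray (F x)"
  shows "semiunitary U"
proof -
  have inj: "inj U"
  proof (rule injI)
    fix x y assume "U x = U y"
    have "U (x - y) = U x - U y" using U_add[of x "scaleC (-1) y"] U_scale[of "-1" y]
      by (simp add: \<sigma>_simps scaleC_minus1)
    then have "U (x - y) = 0" using \<open>U x = U y\<close> by simp
    then have "norm (x - y) = 0" using U_norm by (metis norm_zero)
    then show "x = y" by simp
  qed
  have surj: "surj U"
  proof -
    have "w \<in> range U" for w
    proof (cases "w = 0")
      case True then show ?thesis using U_zero by (metis rangeI)
    next
      case False
      then obtain x where x: "x \<noteq> 0" "ray w = ray (F x)" using surj by blast
      then have "w \<in> ray (U x)" using U_ray_eq ray_self by metis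
      then obtain c where "w = scaleC c (U x)" by (auto simp: ray_mem)
      then have "w = U (scaleC (\<sigma> c) x)" by (simp add: U_scale \<sigma>_simps)
      then show ?thesis by simp
    qed
    then show ?thesis by blast
  qed
  show ?thesis unfolding semiunitary_def
    using inj surj U_add U_scale U_inner \<sigma>_cases bij_def by blast
qed

end


context wig begin

lemma wig_exists:
  assumes surj: "\<And>w. w \<noteq> 0 \<Longrightarrow> \<exists>x. x \<noteq> 0 \<and> ray w = ray (F x)"
  shows "\<exists>U. semiunitary U \<and> (\<forall>x. x \<noteq> 0 \<longrightarrow> ray (F x) = ray (U x))"
proof -
  obtain e :: 'h where e1: "cinner e e = 1" using ex_perp_unit[OF dim, of 0 0] by auto
  have enz: "e \<noteq> 0" using e1 by auto
  define e' where "e' = scaleC (complex_of_real (1 / norm (F e))) (F e)"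
  have e'1: "cinner e' e' = 1" unfolding e'_def by (rule normalize_unit[OF F_nz[OF enz]])
  have e'r: "e' \<in> ray (F e)" by (auto simp: e'_def ray_mem)
  interpret w2: wig2 F e e' by unfold_locales (use e1 e'1 e'r in auto)
  show ?thesis using w2.U_semiunitary[OF surj] w2.U_ray_eq by metis
qed

end

context chu_setup begin

lemma to_wig: assumes "cdim_gt_2 TYPE('h)" shows "wig F"
proof
  show "\<And>x. x \<noteq> 0 \<Longrightarrow> F x \<noteq> 0" by (rule F_nz)
  show "\<And>x y. x \<noteq> 0 \<Longrightarrow> y \<noteq> 0 \<Longrightarrow> tp (F x) (F y) = tp x y" by (rule F_tp)
  show "ray (F (scaleC c x)) = ray (F x)" if "x \<noteq> 0" "c \<noteq> 0" for x :: 'h and c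
    using F_ray[of x] F_ray[of "scaleC c x"] ray_scale[OF that(2), of x] that by simp
  show "cdim_gt_2 TYPE('h)" by (rule assms)
qed

end

lemma semiunitary_D:
  assumes "semiunitary U"
  obtains s where "s = id \<or> s = cnj" "inj U" "\<And>x y. U (x + y) = U x + U y"
    "\<And>c x. U (scaleC c x) = scaleC (s c) (U x)" "\<And>x y. cinner (U x) (U y) = s (cinner x y)"
  using assms unfolding semiunitary_def bij_def by blast

lemma semiunitary_add: "semiunitary U \<Longrightarrow> U (x + y) = U x + U y"
  by (simp add: semiunitary_def)

lemma semiunitary_zero: "semiunitary U \<Longrightarrow> U 0 = 0"
proof -
  assume "semiunitary U"
  then have "U (0 + 0) = U 0 + U 0" by (rule semiunitary_add)
  then show ?thesis by simp
qed

lemma semiunitary_norm: assumes "semiunitary (U :: 'a::complex_inner \<Rightarrow> 'b::complex_inner)"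
  shows "norm (U x) = norm x"
proof -
  obtain s where s: "s = id \<or> s = cnj" "\<And>x y. cinner (U x) (U y) = s (cinner x y)"
    using semiunitary_D[OF assms] by metis
  have "cinner (U x) (U x) = cinner x x" using s cinner_self[of x] by auto
  then show ?thesis by (metis cinner_self norm_ge_zero of_real_eq_iff power2_eq_iff_nonneg)
qed

lemma semiunitary_nonpar:
  assumes U: "semiunitary (U :: 'a::complex_inner \<Rightarrow> 'b::complex_inner)"
    and nz: "\<psi> \<noteq> 0" "yy \<noteq> 0" and np: "yy \<notin> ray \<psi>" and eq: "U \<psi> = scaleC d (U yy)"
  shows False
proof -
  obtain s where s: "s = id \<or> s = cnj" "inj U" "\<And>c x. U (scaleC c x) = scaleC (s c) (U x)"
    using semiunitary_D[OF U] by metis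
  have "U (scaleC (s d) yy) = U \<psi>" using s eq by auto
  then have "\<psi> = scaleC (s d) yy" using s(2) by (simp add: inj_eq)
  then have "\<psi> \<in> ray yy" by (auto simp: ray_mem)
  then have "ray \<psi> = ray yy" using ray_eq_of_mem nz by metis
  then show False using np ray_self by metis
qed

lemma semiunitary_same_coef:
  assumes U: "semiunitary (U :: 'a::complex_inner \<Rightarrow> 'b::complex_inner)" and V: "semiunitary (V :: 'a \<Rightarrow> 'b)"
    and rays: "\<forall>\<psi>. \<psi> \<noteq> 0 \<longrightarrow> ray (U \<psi>) = ray (V \<psi>)"
    and nz: "\<psi> \<noteq> 0" "yy \<noteq> 0" and np: "yy \<notin> ray \<psi>"
    and a: "V \<psi> = scaleC a (U \<psi>)" and b: "V yy = scaleC b (U yy)"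
  shows "a = b"
proof -
  have np': "\<psi> \<notin> ray yy" using np nz ray_eq_of_mem ray_self by metis
  have s: "\<psi> + yy \<noteq> 0"
  proof
    assume "\<psi> + yy = 0"
    then have "yy = scaleC (-1) \<psi>" by (simp add: scaleC_minus1 add_eq_0_iff)
    then show False using np by (auto simp: ray_mem)
  qed
  have addU: "U (\<psi> + yy) = U \<psi> + U yy" and addV: "V (\<psi> + yy) = V \<psi> + V yy"
    using semiunitary_add[OF U] semiunitary_add[OF V] by blast+
  have "V (\<psi> + yy) \<in> ray (U (\<psi> + yy))" using rays s ray_self by metis
  then obtain l where l: "V (\<psi> + yy) = scaleC l (U (\<psi> + yy))" by (auto simp: ray_mem)
  then have eq: "scaleC a (U \<psi>) + scaleC b (U yy) = scaleC l (U \<psi>) + scaleC l (U yy)"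
    using addU addV a b by (simp add: scaleC_add_right)
  have "a = l"
  proof (rule ccontr)
    assume "a \<noteq> l"
    have "scaleC (a - l) (U \<psi>) = scaleC (l - b) (U yy)" using eq
      by (simp add: scaleC_diff_left algebra_simps)
    then have "U \<psi> = scaleC ((l - b) / (a - l)) (U yy)"
      using \<open>a \<noteq> l\<close> by (metis divide_inverse mult.commute right_inverse right_minus_eq scaleC_scaleC scaleC_one)
    then show False using semiunitary_nonpar[OF U nz np] by blast
  qed
  moreover have "b = l"
  proof (rule ccontr)
    assume "b \<noteq> l"
    have "scaleC (b - l) (U yy) = scaleC (l - a) (U \<psi>)" using eq
      by (simp add: scaleC_diff_left algebra_simps)
    then have "U yy = scaleC ((l - a) / (b - l)) (U \<psi>)"
      using \<open>b \<noteq> l\<close> by (metis divide_inverse mult.commute right_inverse right_minus_eq scaleC_scaleC scaleC_one)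
    then show False using semiunitary_nonpar[OF U nz(2,1) np'] by blast
  qed
  ultimately show ?thesis by simp
qed

lemma semiunitary_unique:
  assumes dim: "cdim_gt_2 TYPE('a::complex_inner)"
    and U: "semiunitary (U :: 'a \<Rightarrow> 'b::complex_inner)" and V: "semiunitary (V :: 'a \<Rightarrow> 'b)"
    and rays: "\<forall>\<psi>. \<psi> \<noteq> 0 \<longrightarrow> ray (U \<psi>) = ray (V \<psi>)"
  shows "\<exists>c. cmod c = 1 \<and> (\<forall>\<psi>. V \<psi> = scaleC c (U \<psi>))"
proof -
  have coef: "\<exists>l. V \<psi> = scaleC l (U \<psi>)" if "\<psi> \<noteq> 0" for \<psi>
  proof -
    have "V \<psi> \<in> ray (U \<psi>)" using rays that ray_self by metis
    then show ?thesis by (auto simp: ray_mem)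
  qed
  obtain x0 :: 'a where x0: "x0 \<noteq> 0" using ex_perp_nz[OF dim, of 0 0] by auto
  obtain c where c: "V x0 = scaleC c (U x0)" using coef[OF x0] by blast
  have perp_np: "z \<notin> ray y" if "z \<noteq> 0" "cinner y z = 0" "y \<noteq> 0" for y z :: 'a
  proof
    assume "z \<in> ray y"
    then obtain k where "z = scaleC k y" by (auto simp: ray_mem)
    then have "k * cinner y y = 0" using that by (simp add: ci_simps)
    then show False using that \<open>z = scaleC k y\<close> by simp
  qed
  have all: "V \<psi> = scaleC c (U \<psi>)" for \<psi>
  proof (cases "\<psi> = 0")
    case True
    have "U 0 = 0" "V 0 = 0" using semiunitary_zero[OF U] semiunitary_zero[OF V] by blast+
    then show ?thesis using True by simp
  next
    case False
    obtain l where l: "V \<psi> = scaleC l (U \<psi>)" using coef[OF False] by blast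
    show ?thesis
    proof (cases "\<psi> \<in> ray x0")
      case False
      have "c = l" by (rule semiunitary_same_coef[OF U V rays x0 \<open>\<psi> \<noteq> 0\<close> False c l])
      then show ?thesis using l by simp
    next
      case True
      have rr: "ray \<psi> = ray x0" using ray_eq_of_mem[OF True \<open>\<psi> \<noteq> 0\<close>] .
      obtain z :: 'a where z: "z \<noteq> 0" "cinner x0 z = 0" using ex_perp_nz[OF dim, of x0 x0] by auto
      have np0: "z \<notin> ray x0" using perp_np[OF z x0] .
      then have np1: "z \<notin> ray \<psi>" using rr by simp
      obtain m where m: "V z = scaleC m (U z)" using coef[OF z(1)] by blast
      have "c = m" by (rule semiunitary_same_coef[OF U V rays x0 z(1) np0 c m])
      moreover have "l = m" by (rule semiunitary_same_coef[OF U V rays \<open>\<psi> \<noteq> 0\<close> z(1) np1 l m])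
      ultimately show ?thesis using l by simp
    qed
  qed
  have "norm (V x0) = norm (U x0)" using semiunitary_norm[OF U] semiunitary_norm[OF V] by simp
  then have "cmod c * norm (U x0) = norm (U x0)" using c by (simp add: norm_scaleC)
  moreover have "norm (U x0) \<noteq> 0" using semiunitary_norm[OF U] x0 by simp
  ultimately have "cmod c = 1" by simp
  then show ?thesis using all by blast
qed

theorem theorem3p12:
  fixes fl :: "'h::chilbert set \<Rightarrow> 'k::chilbert set"
    and fu :: "'k set \<Rightarrow> 'h set"
  assumes "cdim_gt_2 TYPE('h)" and "cdim_gt_2 TYPE('k)"
    and "chu_morphism (rays :: 'h set set) (closed_subspaces :: 'h set set) ebar
                      (rays :: 'k set set) (closed_subspaces :: 'k set set) ebar fl fu"
    and "inj_on fl rays"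
  shows "\<exists>U :: 'h \<Rightarrow> 'k. semiunitary U \<and> (\<forall>\<psi>. \<psi> \<noteq> 0 \<longrightarrow> fl (ray \<psi>) = ray (U \<psi>)) \<and>
           (\<forall>V :: 'h \<Rightarrow> 'k. semiunitary V \<and> (\<forall>\<psi>. \<psi> \<noteq> 0 \<longrightarrow> fl (ray \<psi>) = ray (V \<psi>)) \<longrightarrow>
              (\<exists>c. cmod c = 1 \<and> (\<forall>\<psi>. V \<psi> = scaleC c (U \<psi>))))"
proof -
  interpret cs: chu_setup fl fu using assms(3,4) by unfold_locales
  interpret wg: wig cs.F using cs.to_wig[OF assms(1)] .
  obtain x0 :: 'h where x0: "x0 \<noteq> 0" using ex_perp_nz[OF assms(1), of 0 0] by auto
  obtain U where U: "semiunitary U" "\<forall>x. x \<noteq> 0 \<longrightarrow> ray (cs.F x) = ray (U x)"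
    using wg.wig_exists[OF cs.F_surj[OF _ x0]] by blast
  have Ur: "\<forall>\<psi>. \<psi> \<noteq> 0 \<longrightarrow> fl (ray \<psi>) = ray (U \<psi>)" using U(2) cs.F_ray by simp
  have "semiunitary V \<and> (\<forall>\<psi>. \<psi> \<noteq> 0 \<longrightarrow> fl (ray \<psi>) = ray (V \<psi>)) \<longrightarrow>
              (\<exists>c. cmod c = 1 \<and> (\<forall>\<psi>. V \<psi> = scaleC c (U \<psi>)))" for V :: "'h \<Rightarrow> 'k"
  proof
    assume V: "semiunitary V \<and> (\<forall>\<psi>. \<psi> \<noteq> 0 \<longrightarrow> fl (ray \<psi>) = ray (V \<psi>))"
    have "\<forall>\<psi>. \<psi> \<noteq> 0 \<longrightarrow> ray (U \<psi>) = ray (V \<psi>)"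
    proof (intro allI impI)
      fix \<psi> :: 'h assume "\<psi> \<noteq> 0"
      then have a: "fl (ray \<psi>) = ray (U \<psi>)" and b: "fl (ray \<psi>) = ray (V \<psi>)" using Ur V by blast+
      show "ray (U \<psi>) = ray (V \<psi>)" using a b by simp
    qed
    then show "\<exists>c. cmod c = 1 \<and> (\<forall>\<psi>. V \<psi> = scaleC c (U \<psi>))"
      by (rule semiunitary_unique[OF assms(1) U(1) conjunct1[OF V]])
  qed
  then show ?thesis using U(1) Ur by blast
qed


end
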